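(* Let $k$ be a field of characteristic $0$, $R=k[x_1,\dots,x_n]$, $\ell=x_1+\dots+x_n$, let $d$ be a positive integer with $d\le n$, let $J=(x_1^2,\dots,x_n^2)$ and $G=J\colon(\ell^d)$ (equivalently, $G$ is the annihilator ideal of $e_{n-d}(X_1,\dots,X_n)$). Then $$G=J+\Big(\prod_{i=1}^{(n-d+1)/2}(x_{2i-1}-x_{2i})\Big)_{S_n}\quad\text{if } n+d \text{ is odd},$$ $$G=J+\Big(x_{n-d+1}\prod_{i=1}^{(n-d)/2}(x_{2i-1}-x_{2i})\Big)_{S_n}\quad\text{if } n+d \text{ is even}.$$ (That is, the products $(x_1-x_2)(x_3-x_4)\cdots(x_{n-d}-x_{n-d+1})$, respectively $(x_1-x_2)\cdots(x_{n-d-1}-x_{n-d})x_{n-d+1}$.)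
   Context: The symmetric group $S_n$ acts on $R$ by permuting the variables, and for $f\in R$, $(f)_{S_n}$ denotes the ideal generated by $\{\sigma(f)\mid\sigma\in S_n\}$. $R$ acts on $S=k[X_1,\dots,X_n]$ by $x_i\circ F=\partial F/\partial X_i$, and the annihilator ideal of $F\in S$ is $\{f\in R\mid f\circ F=0\}$; $e_m$ denotes the $m$-th elementary symmetric polynomial. An empty product equals $1$. *)

theory Defs
  imports "HOL-Library.Poly_Mapping" "HOL-Combinatorics.Permutations"
begin

text \<open>Variables are indexed by naturals;
the ring R = k[x_1,...,x_n] is the set of polynomials involving only x_1..x_n.\<close>

type_synonym 'k mpoly = "(nat \<Rightarrow>\<^sub>0 nat) \<Rightarrow>\<^sub>0 'k"

definition var :: "nat \<Rightarrow> 'k::comm_ring_1 mpoly" where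
  "var i = Poly_Mapping.single (Poly_Mapping.single i 1) 1"

definition polyR :: "nat \<Rightarrow> 'k::comm_ring_1 mpoly set" where
  "polyR n = {p :: 'k mpoly. \<forall>m \<in> Poly_Mapping.keys p. Poly_Mapping.keys m \<subseteq> {1..n}}"

definition ideal_gen :: "nat \<Rightarrow> 'k::comm_ring_1 mpoly set \<Rightarrow> 'k mpoly set" where
  "ideal_gen n S = {(\<Sum>j<(N::nat). c j * g j) | N c g.
      (\<forall>j<N. c j \<in> polyR n \<and> g j \<in> S)}"

text \<open>Action of a permutation of variables: the ring endomorphism x_i |-> x_(sigma i).\<close>
definition perm_act :: "(nat \<Rightarrow> nat) \<Rightarrow> 'k::comm_ring_1 mpoly \<Rightarrow> 'k mpoly" where
  "perm_act \<sigma> p = (\<Sum>m \<in> Poly_Mapping.keys p.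
      Poly_Mapping.single 0 (Poly_Mapping.lookup p m) *
      (\<Prod>i \<in> Poly_Mapping.keys m. var (\<sigma> i) ^ Poly_Mapping.lookup m i))"

text \<open>The S_n-orbit of f: {sigma(f) | sigma in S_n}; (f)_{S_n} is the ideal it generates.\<close>
definition Sn_orbit :: "nat \<Rightarrow> 'k::comm_ring_1 mpoly \<Rightarrow> 'k mpoly set" where
  "Sn_orbit n f = {perm_act \<sigma> f | \<sigma>. \<sigma> permutes {1..n}}"

definition J_gens :: "nat \<Rightarrow> 'k::comm_ring_1 mpoly set" where
  "J_gens n = {var i ^ 2 | i. i \<in> {1..n}}"

definition J_ideal :: "nat \<Rightarrow> 'k::comm_ring_1 mpoly set" where
  "J_ideal n = ideal_gen n (J_gens n)"

definition ell :: "nat \<Rightarrow> 'k::comm_ring_1 mpoly" where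
  "ell n = (\<Sum>i=1..n. var i)"

definition colon_ideal :: "nat \<Rightarrow> nat \<Rightarrow> 'k::comm_ring_1 mpoly set" where
  "colon_ideal n d = {f \<in> polyR n. f * ell n ^ d \<in> J_ideal n}"

end

theory Submission
  imports Defs
begin


lemma poly_mapping_expand:
  "p = (\<Sum>m\<in>Poly_Mapping.keys p. Poly_Mapping.single m (Poly_Mapping.lookup p m))"
proof (rule poly_mapping_eqI)
  fix k
  show "Poly_Mapping.lookup p k = Poly_Mapping.lookup (\<Sum>m\<in>Poly_Mapping.keys p. Poly_Mapping.single m (Poly_Mapping.lookup p m)) k"
    unfolding lookup_sum lookup_single
    by (cases "k \<in> Poly_Mapping.keys p") (auto simp: when_def in_keys_iff)
qed

lemma var_pow: "(var i :: 'k::field_char_0 mpoly) ^ k = Poly_Mapping.single (Poly_Mapping.single i k) 1"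
proof (induction k)
  case 0
  then show ?case by simp
next
  case (Suc k)
  have "(var i :: 'k mpoly) ^ Suc k = var i * var i ^ k" by simp
  also have "\<dots> = Poly_Mapping.single (Poly_Mapping.single i 1) 1 * Poly_Mapping.single (Poly_Mapping.single i k) 1"
    by (simp only: Suc.IH) (simp add: var_def)
  also have "\<dots> = Poly_Mapping.single (Poly_Mapping.single i 1 + Poly_Mapping.single i k) 1"
    by (simp add: mult_single)
  also have "Poly_Mapping.single i 1 + Poly_Mapping.single i k = Poly_Mapping.single i (Suc k)"
    by (simp add: single_add[symmetric])
  finally show ?case .
qed

lemma prod_single_one:
  "finite A \<Longrightarrow> (\<Prod>i\<in>A. Poly_Mapping.single (f i) (1::'k::field_char_0)) = Poly_Mapping.single (\<Sum>i\<in>A. f i) 1"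
  by (induction A rule: finite_induct) (auto simp: mult_single)

lemma monomial_expand:
  "Poly_Mapping.single m c = Poly_Mapping.single 0 (c::'k::field_char_0) *
     (\<Prod>i\<in>Poly_Mapping.keys m. var i ^ Poly_Mapping.lookup m i)"
proof -
  have "(\<Prod>i\<in>Poly_Mapping.keys m. (var i :: 'k mpoly) ^ Poly_Mapping.lookup m i)
      = Poly_Mapping.single (\<Sum>i\<in>Poly_Mapping.keys m. Poly_Mapping.single i (Poly_Mapping.lookup m i)) 1"
    by (simp add: var_pow prod_single_one)
  also have "(\<Sum>i\<in>Poly_Mapping.keys m. Poly_Mapping.single i (Poly_Mapping.lookup m i)) = m"
    by (rule poly_mapping_expand[symmetric])
  finally show ?thesis by (simp add: mult_single)
qed

lemma polyR_iff: "p \<in> polyR n \<longleftrightarrow> (\<forall>m \<in> Poly_Mapping.keys p. Poly_Mapping.keys m \<subseteq> {1..n})"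
  by (simp add: polyR_def)

lemma polyR_zero[simp]: "0 \<in> polyR n"
  by (simp add: polyR_def)

lemma polyR_const[simp]: "Poly_Mapping.single 0 c \<in> polyR n"
  by (simp add: polyR_def)

lemma polyR_one[simp]: "1 \<in> polyR n"
  by (simp add: polyR_def)

lemma polyR_of_nat[simp]: "of_nat k \<in> polyR n"
  by (metis polyR_const single_of_nat)

lemma polyR_var[simp]: "i \<in> {1..n} \<Longrightarrow> (var i :: 'k::field_char_0 mpoly) \<in> polyR n"
  by (simp add: polyR_def var_def)

lemma polyR_var'[simp]: "0 < i \<Longrightarrow> i \<le> n \<Longrightarrow> (var i :: 'k::field_char_0 mpoly) \<in> polyR n"
  by (simp add: polyR_def var_def)

lemma polyR_add[simp]: "p \<in> polyR n \<Longrightarrow> q \<in> polyR n \<Longrightarrow> p + q \<in> polyR n"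
  using keys_add[of p q] by (auto simp: polyR_def)

lemma polyR_uminus[simp]: "p \<in> polyR n \<Longrightarrow> - p \<in> polyR n"
  by (auto simp: polyR_def)

lemma polyR_diff[simp]: "p \<in> polyR n \<Longrightarrow> q \<in> polyR n \<Longrightarrow> p - q \<in> polyR n"
  using polyR_add[of p n "-q"] by simp

lemma polyR_mult[simp]: "p \<in> polyR n \<Longrightarrow> q \<in> polyR n \<Longrightarrow> p * q \<in> polyR n"
proof -
  assume p: "p \<in> polyR n" and q: "q \<in> polyR n"
  show ?thesis
  proof (unfold polyR_def, intro CollectI ballI)
    fix m assume "m \<in> Poly_Mapping.keys (p * q)"
    then obtain a b where "m = a + b" "a \<in> Poly_Mapping.keys p" "b \<in> Poly_Mapping.keys q"
      using keys_mult by blast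
    then show "Poly_Mapping.keys m \<subseteq> {1..n}"
      using p q keys_add[of a b] unfolding polyR_def by blast
  qed
qed

lemma polyR_sum[simp]: "(\<And>i. i \<in> A \<Longrightarrow> f i \<in> polyR n) \<Longrightarrow> sum f A \<in> polyR n"
  by (induction A rule: infinite_finite_induct) auto

lemma polyR_prod[simp]: "(\<And>i. i \<in> A \<Longrightarrow> f i \<in> polyR n) \<Longrightarrow> prod f A \<in> polyR n"
  by (induction A rule: infinite_finite_induct) auto

lemma polyR_power[simp]: "p \<in> polyR n \<Longrightarrow> p ^ k \<in> polyR n"
  by (induction k) auto

lemma polyR_mono: "n \<le> n' \<Longrightarrow> p \<in> polyR n \<Longrightarrow> p \<in> polyR n'"
  by (fastforce simp: polyR_def)

lemma polyR_single: "Poly_Mapping.keys m \<subseteq> {1..n} \<Longrightarrow> Poly_Mapping.single m c \<in> polyR n"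
  by (simp add: polyR_def)

lemma polyR_induct[consumes 1, case_names const var add mult]:
  fixes p :: "'k::field_char_0 mpoly"
  assumes "p \<in> polyR n"
    and const: "\<And>c. P (Poly_Mapping.single 0 c)"
    and var: "\<And>i. i \<in> {1..n} \<Longrightarrow> P (var i)"
    and add: "\<And>p q. p \<in> polyR n \<Longrightarrow> q \<in> polyR n \<Longrightarrow> P p \<Longrightarrow> P q \<Longrightarrow> P (p + q)"
    and mult: "\<And>p q. p \<in> polyR n \<Longrightarrow> q \<in> polyR n \<Longrightarrow> P p \<Longrightarrow> P q \<Longrightarrow> P (p * q)"
  shows "P p"
proof -
  have P0: "P 0" using const[of 0] by simp
  have P1: "P 1" using const[of 1] by simp
  have pow: "P (var i ^ k)" if "i \<in> {1..n}" for i k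
  proof (induction k)
    case 0 then show ?case using P1 by simp
  next
    case (Suc k) then show ?case using mult[of "var i" "var i ^ k"] var[OF that] that by simp
  qed
  have prodP: "(\<And>i. i \<in> A \<Longrightarrow> P (f i) \<and> f i \<in> polyR n) \<Longrightarrow> P (prod f A) \<and> prod f A \<in> polyR n" for A and f :: "nat \<Rightarrow> 'k mpoly"
    by (induction A rule: infinite_finite_induct) (auto simp: P1 intro!: mult)
  have sumP: "(\<And>i. i \<in> A \<Longrightarrow> P (f i) \<and> f i \<in> polyR n) \<Longrightarrow> P (sum f A) \<and> sum f A \<in> polyR n" for A and f :: "(nat \<Rightarrow>\<^sub>0 nat) \<Rightarrow> 'k mpoly"
    by (induction A rule: infinite_finite_induct) (auto simp: P0 intro!: add)
  have mono: "P (Poly_Mapping.single m c) \<and> Poly_Mapping.single m c \<in> polyR n" if "m \<in> Poly_Mapping.keys p" for m c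
  proof -
    have km: "Poly_Mapping.keys m \<subseteq> {1..n}" using assms(1) that by (auto simp: polyR_def)
    have "P (\<Prod>i\<in>Poly_Mapping.keys m. var i ^ Poly_Mapping.lookup m i) \<and> (\<Prod>i\<in>Poly_Mapping.keys m. (var i :: 'k mpoly) ^ Poly_Mapping.lookup m i) \<in> polyR n"
      by (rule prodP) (use km pow in auto)
    then show ?thesis
      using mult[of "Poly_Mapping.single 0 c"] const[of c] km
      by (simp add: monomial_expand[of m c] polyR_single)
  qed
  show ?thesis
    by (subst poly_mapping_expand) (rule conjunct1[OF sumP], use mono in auto)
qed

section \<open>Generated ideals\<close>

lemma sum_split_add: fixes a b :: nat shows "(\<Sum>j<a+b. f j) = (\<Sum>j<a. f j) + (\<Sum>j<b. f (a+j))"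
  by (induction b) (auto simp: add.assoc)

lemma ideal_genI:
  fixes N :: nat
  assumes "p = (\<Sum>j<N. c j * g j)" "\<forall>j<N. c j \<in> polyR n \<and> g j \<in> S"
  shows "p \<in> ideal_gen n S"
  unfolding ideal_gen_def mem_Collect_eq
  by (rule exI[of _ N], rule exI[of _ c], rule exI[of _ g]) (use assms in simp)

lemma ideal_gen_zero[simp]: "0 \<in> ideal_gen n S"
  unfolding ideal_gen_def by (rule CollectI, rule exI[of _ 0]) auto

lemma ideal_gen_gen: "g \<in> S \<Longrightarrow> g \<in> ideal_gen n S"
  unfolding ideal_gen_def
  by (rule CollectI, rule exI[of _ "1::nat"], rule exI[of _ "\<lambda>_. 1"], rule exI[of _ "\<lambda>_. g"]) auto

lemma ideal_gen_add:
  assumes "p \<in> ideal_gen n S" "q \<in> ideal_gen n S"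
  shows "p + q \<in> ideal_gen n S"
proof -
  obtain N1 :: nat and c1 g1 where p: "p = (\<Sum>j<N1. c1 j * g1 j)" "\<forall>j<N1. c1 j \<in> polyR n \<and> g1 j \<in> S"
    using assms(1) unfolding ideal_gen_def mem_Collect_eq by blast
  obtain N2 :: nat and c2 g2 where q: "q = (\<Sum>j<N2. c2 j * g2 j)" "\<forall>j<N2. c2 j \<in> polyR n \<and> g2 j \<in> S"
    using assms(2) unfolding ideal_gen_def mem_Collect_eq by blast
  define c where "c j = (if j < N1 then c1 j else c2 (j - N1))" for j
  define g where "g j = (if j < N1 then g1 j else g2 (j - N1))" for j
  have "(\<Sum>j<N1 + N2. c j * g j) = (\<Sum>j<N1. c j * g j) + (\<Sum>j<N2. c (N1 + j) * g (N1 + j))"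
    by (rule sum_split_add)
  also have "\<dots> = p + q" by (simp add: p q c_def g_def)
  finally have "p + q = (\<Sum>j<N1 + N2. c j * g j)" by simp
  moreover have "\<forall>j<N1 + N2. c j \<in> polyR n \<and> g j \<in> S"
    using p(2) q(2) by (auto simp: c_def g_def)
  ultimately show ?thesis by (rule ideal_genI)
qed

lemma ideal_gen_mult:
  assumes "p \<in> ideal_gen n S" "r \<in> polyR n"
  shows "r * p \<in> ideal_gen n S"
proof -
  obtain N :: nat and c g where p: "p = (\<Sum>j<N. c j * g j)" "\<forall>j<N. c j \<in> polyR n \<and> g j \<in> S"
    using assms(1) unfolding ideal_gen_def mem_Collect_eq by blast
  have "r * p = (\<Sum>j<N. (r * c j) * g j)" by (simp add: p sum_distrib_left mult.assoc)
  moreover have "\<forall>j<N. r * c j \<in> polyR n \<and> g j \<in> S" using p(2) assms(2) by auto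
  ultimately show ?thesis by (rule ideal_genI)
qed



lemma ideal_gen_uminus: "p \<in> ideal_gen n S \<Longrightarrow> - p \<in> ideal_gen n S"
  using ideal_gen_mult[of p n S "-1"] by simp

lemma ideal_gen_diff: "p \<in> ideal_gen n S \<Longrightarrow> q \<in> ideal_gen n S \<Longrightarrow> p - q \<in> ideal_gen n S"
  using ideal_gen_add[of p n S "-q"] ideal_gen_uminus[of q n S] by simp

lemma ideal_gen_mult_right: "p \<in> ideal_gen n S \<Longrightarrow> r \<in> polyR n \<Longrightarrow> p * r \<in> ideal_gen n S"
  using ideal_gen_mult[of p n S r] by (simp add: mult.commute)

lemma ideal_gen_sum: "(\<And>i. i \<in> A \<Longrightarrow> f i \<in> ideal_gen n S) \<Longrightarrow> sum f A \<in> ideal_gen n S"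
  by (induction A rule: infinite_finite_induct) (auto intro: ideal_gen_add)

lemma ideal_gen_least:
  assumes "S \<subseteq> I" "0 \<in> I" "\<And>p q. p \<in> I \<Longrightarrow> q \<in> I \<Longrightarrow> p + q \<in> I"
    "\<And>r p. r \<in> polyR n \<Longrightarrow> p \<in> I \<Longrightarrow> r * p \<in> I"
  shows "ideal_gen n S \<subseteq> I"
proof
  fix p assume "p \<in> ideal_gen n S"
  then obtain N :: nat and c g where p: "p = (\<Sum>j<N. c j * g j)" "\<forall>j<N. c j \<in> polyR n \<and> g j \<in> S"
    unfolding ideal_gen_def mem_Collect_eq by blast
  have "(\<Sum>j<M. c j * g j) \<in> I" if "M \<le> N" for M
    using that
  proof (induction M)
    case 0 then show ?case using assms(2) by simp
  next
    case (Suc M)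
    then have "M < N" by simp
    then have "c M * g M \<in> I" using assms(1,4) p(2) by blast
    then show ?case using Suc assms(3) by simp
  qed
  then show "p \<in> I" using p(1) by simp
qed

lemma ideal_gen_sub_ideal: "S \<subseteq> ideal_gen n T \<Longrightarrow> ideal_gen n S \<subseteq> ideal_gen n T"
  by (rule ideal_gen_least) (auto intro: ideal_gen_add ideal_gen_mult)

lemma ideal_gen_polyR: "S \<subseteq> polyR n \<Longrightarrow> ideal_gen n S \<subseteq> polyR n"
  by (rule ideal_gen_least) auto

lemma ideal_gen_mono: "S \<subseteq> T \<Longrightarrow> n \<le> n' \<Longrightarrow> ideal_gen n S \<subseteq> ideal_gen n' T"
  unfolding ideal_gen_def by (blast intro: polyR_mono)

section \<open>The ideal J\<close>

lemma J_gens_polyR: "(J_gens n :: 'k::field_char_0 mpoly set) \<subseteq> polyR n"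
  by (auto simp: J_gens_def)

lemma J_polyR: "p \<in> J_ideal n \<Longrightarrow> (p :: 'k::field_char_0 mpoly) \<in> polyR n"
  unfolding J_ideal_def using ideal_gen_polyR[OF J_gens_polyR] by blast

lemma J_sq: "i \<in> {1..n} \<Longrightarrow> c \<in> polyR n \<Longrightarrow> c * (var i)\<^sup>2 \<in> (J_ideal n :: 'k::field_char_0 mpoly set)"
  unfolding J_ideal_def by (rule ideal_gen_mult) (auto simp: J_gens_def intro!: ideal_gen_gen)

lemma J_char:
  "(p \<in> (J_ideal n :: 'k::field_char_0 mpoly set)) \<longleftrightarrow>
     p \<in> polyR n \<and> (\<forall>m \<in> Poly_Mapping.keys p. \<exists>i. 2 \<le> Poly_Mapping.lookup m i)"
proof
  assume "p \<in> J_ideal n"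
  moreover have "J_ideal n \<subseteq> {p :: 'k mpoly. p \<in> polyR n \<and> (\<forall>m \<in> Poly_Mapping.keys p. \<exists>i. 2 \<le> Poly_Mapping.lookup m i)}"
    unfolding J_ideal_def
  proof (rule ideal_gen_least)
    show "J_gens n \<subseteq> {p :: 'k mpoly. p \<in> polyR n \<and> (\<forall>m \<in> Poly_Mapping.keys p. \<exists>i. 2 \<le> Poly_Mapping.lookup m i)}"
    proof
      fix x :: "'k mpoly" assume "x \<in> J_gens n"
      then obtain i where i: "i \<in> {1..n}" "x = (var i)^2" by (auto simp: J_gens_def)
      then show "x \<in> {p :: 'k mpoly. p \<in> polyR n \<and> (\<forall>m \<in> Poly_Mapping.keys p. \<exists>i. 2 \<le> Poly_Mapping.lookup m i)}"
        by (auto simp: var_pow intro!: polyR_single exI[of _ i])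
    qed
    show "0 \<in> {p :: 'k mpoly. p \<in> polyR n \<and> (\<forall>m \<in> Poly_Mapping.keys p. \<exists>i. 2 \<le> Poly_Mapping.lookup m i)}"
      by simp
  next
    fix p q :: "'k mpoly"
    assume "p \<in> {p. p \<in> polyR n \<and> (\<forall>m \<in> Poly_Mapping.keys p. \<exists>i. 2 \<le> Poly_Mapping.lookup m i)}"
      "q \<in> {p. p \<in> polyR n \<and> (\<forall>m \<in> Poly_Mapping.keys p. \<exists>i. 2 \<le> Poly_Mapping.lookup m i)}"
    then show "p + q \<in> {p. p \<in> polyR n \<and> (\<forall>m \<in> Poly_Mapping.keys p. \<exists>i. 2 \<le> Poly_Mapping.lookup m i)}"
      using keys_add[of p q] by auto
  next
    fix r p :: "'k mpoly"
    assume r: "r \<in> polyR n" and "p \<in> {p. p \<in> polyR n \<and> (\<forall>m \<in> Poly_Mapping.keys p. \<exists>i. 2 \<le> Poly_Mapping.lookup m i)}"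
    then have p: "p \<in> polyR n" "\<forall>m \<in> Poly_Mapping.keys p. \<exists>i. 2 \<le> Poly_Mapping.lookup m i" by auto
    have "\<exists>i. 2 \<le> Poly_Mapping.lookup m i" if mk: "m \<in> Poly_Mapping.keys (r * p)" for m
    proof -
      obtain a b where "m = a + b" "a \<in> Poly_Mapping.keys r" "b \<in> Poly_Mapping.keys p"
        using keys_mult mk by blast
      then obtain i where "2 \<le> Poly_Mapping.lookup b i" using p(2) by blast
      then have "2 \<le> Poly_Mapping.lookup m i" using \<open>m = a + b\<close> by (simp add: lookup_add)
      then show ?thesis by blast
    qed
    then show "r * p \<in> {p. p \<in> polyR n \<and> (\<forall>m \<in> Poly_Mapping.keys p. \<exists>i. 2 \<le> Poly_Mapping.lookup m i)}"
      using r p by auto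
  qed
  ultimately show "p \<in> polyR n \<and> (\<forall>m \<in> Poly_Mapping.keys p. \<exists>i. 2 \<le> Poly_Mapping.lookup m i)"
    by blast
next
  assume a: "p \<in> polyR n \<and> (\<forall>m \<in> Poly_Mapping.keys p. \<exists>i. 2 \<le> Poly_Mapping.lookup m i)"
  have "Poly_Mapping.single m (Poly_Mapping.lookup p m) \<in> J_ideal n" if m: "m \<in> Poly_Mapping.keys p" for m
  proof -
    obtain i where i: "2 \<le> Poly_Mapping.lookup m i" using a m by blast
    have km: "Poly_Mapping.keys m \<subseteq> {1..n}" using a m by (auto simp: polyR_def)
    have "i \<in> Poly_Mapping.keys m" using i by (auto simp: in_keys_iff)
    then have iin: "i \<in> {1..n}" using km by blast
    define m' where "m' = Poly_Mapping.update i (Poly_Mapping.lookup m i - 2) m"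
    have mm: "m' + Poly_Mapping.single i 2 = m"
      by (rule poly_mapping_eqI) (use i in \<open>auto simp: m'_def lookup_add lookup_update lookup_single when_def\<close>)
    have km': "Poly_Mapping.keys m' \<subseteq> {1..n}" using km iin by (auto simp: m'_def keys_update)
    have "Poly_Mapping.single m (Poly_Mapping.lookup p m) = Poly_Mapping.single m' (Poly_Mapping.lookup p m) * (var i)\<^sup>2"
      by (simp add: var_pow mult_single mm)
    then show ?thesis using J_sq[OF iin polyR_single[OF km']] by simp
  qed
  then show "p \<in> J_ideal n"
    by (subst poly_mapping_expand) (auto simp: J_ideal_def intro!: ideal_gen_sum)
qed

lemma J_mono: "N \<le> n \<Longrightarrow> p \<in> J_ideal N \<Longrightarrow> (p :: 'k::field_char_0 mpoly) \<in> J_ideal n"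
  by (auto simp: J_char intro: polyR_mono)

lemma J_mult: "p \<in> J_ideal n \<Longrightarrow> r \<in> polyR n \<Longrightarrow> r * p \<in> J_ideal n"
  unfolding J_ideal_def by (rule ideal_gen_mult)



lemma single_mult_expand:
  "Poly_Mapping.single e c * b = (\<Sum>m\<in>Poly_Mapping.keys b. Poly_Mapping.single (e + m) (c * Poly_Mapping.lookup b m))"
  by (subst poly_mapping_expand[of b]) (simp add: sum_distrib_left mult_single)

lemma lookup_single_mult:
  fixes e :: "nat \<Rightarrow>\<^sub>0 nat"
  shows "Poly_Mapping.lookup (Poly_Mapping.single e (c::'k::field_char_0) * b) (e + m) = c * Poly_Mapping.lookup b m"
proof -
  have "Poly_Mapping.lookup (Poly_Mapping.single e c * b) (e + m)
     = (\<Sum>m'\<in>Poly_Mapping.keys b. (c * Poly_Mapping.lookup b m' when e + m' = e + m))"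
    by (simp add: single_mult_expand lookup_sum lookup_single)
  also have "\<dots> = (\<Sum>m'\<in>Poly_Mapping.keys b. (c * Poly_Mapping.lookup b m' when m' = m))"
    by (rule sum.cong) (auto simp: when_def dest: add_left_imp_eq)
  also have "\<dots> = c * Poly_Mapping.lookup b m"
    by (cases "m \<in> Poly_Mapping.keys b") (auto simp: when_def in_keys_iff)
  finally show ?thesis .
qed

lemma lookup_var_mult_zero:
  assumes "Poly_Mapping.lookup k i = 0"
  shows "Poly_Mapping.lookup ((var i :: 'k::field_char_0 mpoly) * b) k = 0"
proof -
  have "Poly_Mapping.lookup ((var i :: 'k mpoly) * b) k
     = (\<Sum>m'\<in>Poly_Mapping.keys b. (1 * Poly_Mapping.lookup b m' when Poly_Mapping.single i 1 + m' = k))"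
    by (simp add: var_def single_mult_expand lookup_sum lookup_single)
  also have "\<dots> = 0"
  proof (rule sum.neutral, intro ballI)
    fix m' assume "m' \<in> Poly_Mapping.keys b"
    have "Poly_Mapping.single i 1 + m' \<noteq> k"
    proof
      assume "Poly_Mapping.single i 1 + m' = k"
      then have "Poly_Mapping.lookup k i = 1 + Poly_Mapping.lookup m' i" by (auto simp: lookup_add)
      then show False using assms by simp
    qed
    then show "(1 * Poly_Mapping.lookup b m' when Poly_Mapping.single i 1 + m' = k) = 0" by simp
  qed
  finally show ?thesis .
qed

lemma polyR_lookup_zero:
  "p \<in> polyR N \<Longrightarrow> m \<in> Poly_Mapping.keys p \<Longrightarrow> Poly_Mapping.lookup m (Suc N) = 0"
proof -
  assume "p \<in> polyR N" "m \<in> Poly_Mapping.keys p"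
  then have "Poly_Mapping.keys m \<subseteq> {1..N}" by (auto simp: polyR_def)
  then have "Suc N \<notin> Poly_Mapping.keys m" by auto
  then show ?thesis by (simp add: in_keys_iff)
qed

lemma J_split:
  fixes a b :: "'k::field_char_0 mpoly"
  assumes a: "a \<in> polyR N" and b: "b \<in> polyR N" and ab: "a + var (Suc N) * b \<in> J_ideal (Suc N)"
  shows "a \<in> J_ideal N \<and> b \<in> J_ideal N"
proof -
  let ?x = "var (Suc N) :: 'k mpoly"
  have abc: "\<forall>m \<in> Poly_Mapping.keys (a + ?x * b). \<exists>i. 2 \<le> Poly_Mapping.lookup m i"
    using ab by (simp add: J_char)
  have "\<exists>i. 2 \<le> Poly_Mapping.lookup m i" if m: "m \<in> Poly_Mapping.keys a" for m
  proof -
    have "Poly_Mapping.lookup m (Suc N) = 0" using polyR_lookup_zero[OF a m] .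
    then have "Poly_Mapping.lookup (?x * b) m = 0" by (rule lookup_var_mult_zero)
    then have "Poly_Mapping.lookup (a + ?x * b) m = Poly_Mapping.lookup a m" by (simp add: lookup_add)
    then have "m \<in> Poly_Mapping.keys (a + ?x * b)" using m by (simp add: in_keys_iff)
    then show ?thesis using abc by blast
  qed
  then have aJ: "a \<in> J_ideal N" using a by (simp add: J_char)
  have "\<exists>i. 2 \<le> Poly_Mapping.lookup m i" if m: "m \<in> Poly_Mapping.keys b" for m
  proof -
    let ?e = "Poly_Mapping.single (Suc N) (1::nat)"
    have m0: "Poly_Mapping.lookup m (Suc N) = 0" using polyR_lookup_zero[OF b m] .
    have "?e + m \<notin> Poly_Mapping.keys a"
      using polyR_lookup_zero[OF a, of "?e + m"] by (auto simp: lookup_add)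
    then have "Poly_Mapping.lookup a (?e + m) = 0" by (simp add: in_keys_iff)
    moreover have "Poly_Mapping.lookup (?x * b) (?e + m) = Poly_Mapping.lookup b m"
      by (simp add: var_def lookup_single_mult)
    ultimately have "Poly_Mapping.lookup (a + ?x * b) (?e + m) = Poly_Mapping.lookup b m"
      by (simp add: lookup_add)
    then have "?e + m \<in> Poly_Mapping.keys (a + ?x * b)" using m by (simp add: in_keys_iff)
    then obtain i where i: "2 \<le> Poly_Mapping.lookup (?e + m) i" using abc by blast
    show ?thesis
    proof (cases "i = Suc N")
      case True
      then show ?thesis using i m0 by (simp add: lookup_add)
    next
      case False
      then show ?thesis using i by (auto simp: lookup_add lookup_single when_def)
    qed
  qed
  then have "b \<in> J_ideal N" using b by (simp add: J_char)
  then show ?thesis using aJ by simp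
qed

lemma polyR_decomp:
  fixes p :: "'k::field_char_0 mpoly"
  assumes "p \<in> polyR (Suc N)"
  shows "\<exists>g h0 h1. g \<in> polyR N \<and> h0 \<in> polyR N \<and> h1 \<in> polyR (Suc N) \<and>
           p = g + var (Suc N) * h0 + (var (Suc N))\<^sup>2 * h1"
  using assms
proof (induction rule: polyR_induct)
  case (const c)
  show ?case by (rule exI[of _ "Poly_Mapping.single 0 c"], rule exI[of _ 0], rule exI[of _ 0]) simp
next
  case (var i)
  show ?case
  proof (cases "i = Suc N")
    case True
    show ?thesis by (rule exI[of _ 0], rule exI[of _ 1], rule exI[of _ 0]) (simp add: True)
  next
    case False
    then have "i \<in> {1..N}" using var by auto
    show ?thesis by (rule exI[of _ "var i"], rule exI[of _ 0], rule exI[of _ 0]) (simp add: polyR_var[OF \<open>i \<in> {1..N}\<close>])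
  qed
next
  case (add p q)
  then obtain g h0 h1 g' h0' h1' where
    "g \<in> polyR N" "h0 \<in> polyR N" "h1 \<in> polyR (Suc N)" "p = g + var (Suc N) * h0 + (var (Suc N))\<^sup>2 * h1"
    "g' \<in> polyR N" "h0' \<in> polyR N" "h1' \<in> polyR (Suc N)" "q = g' + var (Suc N) * h0' + (var (Suc N))\<^sup>2 * h1'"
    by blast
  note o = this
  show ?case
    by (rule exI[of _ "g + g'"], rule exI[of _ "h0 + h0'"], rule exI[of _ "h1 + h1'"]) (use o in \<open>simp add: algebra_simps\<close>)
next
  case (mult p q)
  then obtain g h0 h1 g' h0' h1' where
    "g \<in> polyR N" "h0 \<in> polyR N" "h1 \<in> polyR (Suc N)" "p = g + var (Suc N) * h0 + (var (Suc N))\<^sup>2 * h1"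
    "g' \<in> polyR N" "h0' \<in> polyR N" "h1' \<in> polyR (Suc N)" "q = g' + var (Suc N) * h0' + (var (Suc N))\<^sup>2 * h1'"
    by blast
  note o = this
  moreover have "polyR N \<subseteq> polyR (Suc N)" using polyR_mono[of N "Suc N"] by auto
  moreover have "var (Suc N) \<in> (polyR (Suc N) :: 'k mpoly set)" by simp
  moreover have "h0 * h0' + g * h1' + h1 * g' + var (Suc N) * (h0 * h1' + h1 * h0') + (var (Suc N))\<^sup>2 * h1 * h1' \<in> polyR (Suc N)"
  proof -
    have S: "polyR N \<subseteq> polyR (Suc N)" using polyR_mono[of N "Suc N"] by auto
    have m: "g \<in> polyR (Suc N)" "h0 \<in> polyR (Suc N)" "g' \<in> polyR (Suc N)" "h0' \<in> polyR (Suc N)"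
      using S o by auto
    have v: "var (Suc N) \<in> (polyR (Suc N) :: 'k mpoly set)" by (rule polyR_var) simp
    show ?thesis using m v o by simp
  qed
  moreover have "(g + x * h0 + x\<^sup>2 * h1) * (g' + x * h0' + x\<^sup>2 * h1') =
     g * g' + x * (g * h0' + h0 * g') + x\<^sup>2 * (h0 * h0' + g * h1' + h1 * g' + x * (h0 * h1' + h1 * h0') + x\<^sup>2 * h1 * h1')"
    for x :: "'k mpoly" by algebra
  ultimately have o: "g * g' \<in> polyR N \<and> g * h0' + h0 * g' \<in> polyR N \<and>
     h0 * h0' + g * h1' + h1 * g' + var (Suc N) * (h0 * h1' + h1 * h0') + (var (Suc N))\<^sup>2 * h1 * h1' \<in> polyR (Suc N) \<and>
     p * q = g * g' + var (Suc N) * (g * h0' + h0 * g') + (var (Suc N))\<^sup>2 *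
       (h0 * h0' + g * h1' + h1 * g' + var (Suc N) * (h0 * h1' + h1 * h0') + (var (Suc N))\<^sup>2 * h1 * h1')"
    by auto
  show ?case
    by (rule exI[of _ "g * g'"], rule exI[of _ "g * h0' + h0 * g'"],
        rule exI[of _ "h0 * h0' + g * h1' + h1 * g' + var (Suc N) * (h0 * h1' + h1 * h0') + (var (Suc N))\<^sup>2 * h1 * h1'"])
      (rule o)
qed

lemma binom2:
  fixes a b :: "'k::field_char_0 mpoly"
  assumes "a \<in> polyR n" "b \<in> polyR n"
  shows "\<exists>c \<in> polyR n. (a + b) ^ d = a ^ d + of_nat d * b * a ^ (d - 1) + b\<^sup>2 * c"
proof (induction d)
  case 0
  then show ?case by (intro bexI[of _ 0]) auto
next
  case (Suc d)
  then obtain c where c: "c \<in> polyR n" "(a + b) ^ d = a ^ d + of_nat d * b * a ^ (d - 1) + b\<^sup>2 * c" by blast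
  show ?case
  proof (cases d)
    case 0
    then show ?thesis by (intro bexI[of _ 0]) auto
  next
    case (Suc e)
    have "(a + b) ^ Suc d = (a ^ d + of_nat d * b * a ^ (d - 1) + b\<^sup>2 * c) * (a + b)"
      using c by simp
    also have "\<dots> = a ^ Suc d + of_nat (Suc d) * b * a ^ (Suc d - 1) + b\<^sup>2 * (of_nat d * a ^ e + c * (a + b))"
      using Suc by (simp add: algebra_simps power2_eq_square)
    finally show ?thesis using c assms by (intro bexI[of _ "of_nat d * a ^ e + c * (a + b)"]) auto
  qed
qed



lemma ell_polyR[simp]: "(ell n :: 'k::field_char_0 mpoly) \<in> polyR n"
  unfolding ell_def by (rule polyR_sum) (rule polyR_var)

lemma ell_Suc: "(ell (Suc N) :: 'k::field_char_0 mpoly) = ell N + var (Suc N)"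
  by (simp add: ell_def)

lemma K_polyR: "p \<in> colon_ideal n d \<Longrightarrow> p \<in> polyR n"
  by (simp add: colon_ideal_def)

lemma J_K: "p \<in> J_ideal n \<Longrightarrow> (p :: 'k::field_char_0 mpoly) \<in> colon_ideal n d"
  by (simp add: colon_ideal_def J_polyR J_ideal_def ideal_gen_mult_right)

lemma J_add: "p \<in> J_ideal n \<Longrightarrow> q \<in> J_ideal n \<Longrightarrow> p + q \<in> J_ideal n"
  unfolding J_ideal_def by (rule ideal_gen_add)

lemma J_diff: "p \<in> J_ideal n \<Longrightarrow> q \<in> J_ideal n \<Longrightarrow> p - q \<in> J_ideal n"
  unfolding J_ideal_def by (rule ideal_gen_diff)

lemma J_zero[simp]: "0 \<in> J_ideal n"
  unfolding J_ideal_def by simp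

lemma J_mult_right: "p \<in> J_ideal n \<Longrightarrow> r \<in> polyR n \<Longrightarrow> p * r \<in> J_ideal n"
  unfolding J_ideal_def by (rule ideal_gen_mult_right)

lemma J_sum: "(\<And>i. i \<in> A \<Longrightarrow> f i \<in> J_ideal n) \<Longrightarrow> sum f A \<in> J_ideal n"
  unfolding J_ideal_def by (rule ideal_gen_sum)

lemma K_add: "p \<in> colon_ideal n d \<Longrightarrow> q \<in> colon_ideal n d \<Longrightarrow> p + q \<in> (colon_ideal n d :: 'k::field_char_0 mpoly set)"
  by (auto simp: colon_ideal_def distrib_right intro: J_add)

lemma K_mult: "r \<in> polyR n \<Longrightarrow> p \<in> colon_ideal n d \<Longrightarrow> r * p \<in> (colon_ideal n d :: 'k::field_char_0 mpoly set)"
  by (auto simp: colon_ideal_def mult.assoc intro: J_mult)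

lemma K_diff: "p \<in> colon_ideal n d \<Longrightarrow> q \<in> colon_ideal n d \<Longrightarrow> p - q \<in> (colon_ideal n d :: 'k::field_char_0 mpoly set)"
  using K_add[of p n d "-q"] K_mult[of "-1" n q d] by simp

section \<open>The generators D\<close>

definition pflat :: "(nat \<times> nat) list \<Rightarrow> nat list" where
  "pflat ps = concat (map (\<lambda>(a,b). [a,b]) ps)"

lemma pflat_simps[simp]: "pflat [] = []" "pflat ((a,b) # ps) = a # b # pflat ps"
  by (simp_all add: pflat_def)

definition pp :: "(nat \<times> nat) list \<Rightarrow> 'k::field_char_0 mpoly" where
  "pp ps = prod_list (map (\<lambda>(a,b). var a - var b) ps)"

lemma pp_simps[simp]: "pp [] = 1" "pp ((a,b) # ps) = (var a - var b) * pp ps"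
  by (simp_all add: pp_def)

definition Dg :: "nat set \<Rightarrow> (nat \<times> nat) list \<Rightarrow> 'k::field_char_0 mpoly" where
  "Dg M ps = (\<Prod>m\<in>M. var m) * pp ps"

definition okD :: "nat \<Rightarrow> nat set \<Rightarrow> (nat \<times> nat) list \<Rightarrow> bool" where
  "okD n M ps \<longleftrightarrow> finite M \<and> M \<subseteq> {1..n} \<and> distinct (pflat ps) \<and> set (pflat ps) \<subseteq> {1..n}
     \<and> M \<inter> set (pflat ps) = {}"

definition Dset :: "nat \<Rightarrow> nat \<Rightarrow> 'k::field_char_0 mpoly set" where
  "Dset n d = {Dg M ps | M ps. okD n M ps \<and> n < card M + 2 * length ps + d}"

definition W :: "nat \<Rightarrow> nat \<Rightarrow> 'k::field_char_0 mpoly set" where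
  "W n d = ideal_gen n (J_gens n \<union> Dset n d)"

lemma pp_polyR: "set (pflat ps) \<subseteq> {1..n} \<Longrightarrow> pp ps \<in> polyR n"
  by (induction ps) auto

lemma prodM_polyR: "M \<subseteq> {1..n} \<Longrightarrow> (\<Prod>m\<in>M. var m) \<in> (polyR n :: 'k::field_char_0 mpoly set)"
  by (rule polyR_prod, rule polyR_var) auto

lemma length_pflat[simp]: "length (pflat ps) = 2 * length ps"
  by (induction ps) auto

lemma Dg_polyR: "okD n M ps \<Longrightarrow> Dg M ps \<in> polyR n"
  unfolding okD_def Dg_def by (intro polyR_mult pp_polyR prodM_polyR) auto

lemma pp_absorb:
  "distinct (pflat ps) \<Longrightarrow> set (pflat ps) \<subseteq> {1..n} \<Longrightarrow>
   pp ps * (\<Sum>i\<in>set (pflat ps). var i) \<in> (J_ideal n :: 'k::field_char_0 mpoly set)"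
proof (induction ps)
  case Nil
  then show ?case by simp
next
  case (Cons p ps)
  obtain a b where p: "p = (a,b)" by fastforce
  have ab: "a \<in> {1..n}" "b \<in> {1..n}" "a \<noteq> b" "a \<notin> set (pflat ps)" "b \<notin> set (pflat ps)"
    using Cons.prems by (auto simp: p)
  have ppp: "pp ps \<in> (polyR n :: 'k mpoly set)" using Cons.prems by (intro pp_polyR) (auto simp: p)
  have "(\<Sum>i\<in>set (pflat (p # ps)). (var i :: 'k mpoly)) = var a + var b + (\<Sum>i\<in>set (pflat ps). var i)"
    using ab by (simp add: p)
  then have "pp (p # ps) * (\<Sum>i\<in>set (pflat (p # ps)). (var i :: 'k mpoly))
     = pp ps * (var a)\<^sup>2 - pp ps * (var b)\<^sup>2 + (var a - var b) * (pp ps * (\<Sum>i\<in>set (pflat ps). var i))"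
    by (simp add: p algebra_simps power2_eq_square)
  moreover have "pp ps * (var a)\<^sup>2 \<in> (J_ideal n :: 'k mpoly set)" using J_sq[OF ab(1) ppp] .
  moreover have "pp ps * (var b)\<^sup>2 \<in> (J_ideal n :: 'k mpoly set)" using J_sq[OF ab(2) ppp] .
  moreover have "(var a - var b) * (pp ps * (\<Sum>i\<in>set (pflat ps). var i)) \<in> (J_ideal n :: 'k mpoly set)"
  proof (rule J_mult)
    show "pp ps * (\<Sum>i\<in>set (pflat ps). var i) \<in> (J_ideal n :: 'k mpoly set)"
      using Cons by (intro Cons.IH) (auto simp: p)
    show "var a - var b \<in> (polyR n :: 'k mpoly set)"
      using ab by (intro polyR_diff polyR_var)
  qed
  ultimately show ?case by (auto intro: J_add J_diff)
qed

lemma Dg_absorb: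
  assumes "okD n M ps"
  shows "Dg M ps * (\<Sum>i\<in>M \<union> set (pflat ps). var i) \<in> (J_ideal n :: 'k::field_char_0 mpoly set)"
proof -
  have ok: "finite M" "M \<subseteq> {1..n}" "distinct (pflat ps)" "set (pflat ps) \<subseteq> {1..n}" "M \<inter> set (pflat ps) = {}"
    using assms by (auto simp: okD_def)
  have split: "(\<Sum>i\<in>M \<union> set (pflat ps). (var i :: 'k mpoly)) = (\<Sum>i\<in>M. var i) + (\<Sum>i\<in>set (pflat ps). var i)"
    using ok by (simp add: sum.union_disjoint)
  have ppp: "pp ps \<in> (polyR n :: 'k mpoly set)" using ok by (intro pp_polyR)
  have "Dg M ps * var m \<in> (J_ideal n :: 'k mpoly set)" if m: "m \<in> M" for m
  proof -
    have eq: "Dg M ps * var m = ((\<Prod>i\<in>M - {m}. var i) * pp ps) * (var m)\<^sup>2"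
      using ok(1) m by (simp add: Dg_def prod.remove power2_eq_square algebra_simps)
    have "(\<Prod>i\<in>M - {m}. var i) \<in> (polyR n :: 'k mpoly set)"
      by (rule prodM_polyR) (use ok(2) in auto)
    then have pm: "(\<Prod>i\<in>M - {m}. var i) * pp ps \<in> (polyR n :: 'k mpoly set)"
      using ppp by (rule polyR_mult)
    have mm: "m \<in> {1..n}" using ok m by auto
    show ?thesis unfolding eq by (rule J_sq[OF mm pm])
  qed
  then have A: "Dg M ps * (\<Sum>i\<in>M. var i) \<in> (J_ideal n :: 'k mpoly set)"
    by (simp add: sum_distrib_left J_sum)
  have B: "Dg M ps * (\<Sum>i\<in>set (pflat ps). var i) \<in> (J_ideal n :: 'k mpoly set)"
    using J_mult[OF pp_absorb[OF ok(3,4)] prodM_polyR[OF ok(2)]]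
    by (simp add: Dg_def mult.assoc)
  show ?thesis using A B by (simp add: split distrib_left J_add)
qed

lemma pow_congr:
  assumes "D * (L - L') \<in> J_ideal n" "D \<in> polyR n" "L \<in> polyR n" "L' \<in> polyR n"
  shows "D * L ^ k - D * L' ^ k \<in> (J_ideal n :: 'k::field_char_0 mpoly set)"
proof (induction k)
  case 0 then show ?case by simp
next
  case (Suc k)
  have "D * L ^ Suc k - D * L' ^ Suc k = (D * L ^ k - D * L' ^ k) * L + L' ^ k * (D * (L - L'))"
    by (simp add: algebra_simps)
  moreover have "(D * L ^ k - D * L' ^ k) * L \<in> J_ideal n" using Suc assms by (intro J_mult_right)
  moreover have "L' ^ k * (D * (L - L')) \<in> J_ideal n" using assms by (rule_tac J_mult) simp_all
  ultimately show ?case by (simp add: J_add)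
qed

lemma ellU_pow:
  assumes "finite U" "U \<subseteq> {1..n}" "card U < k"
  shows "(\<Sum>i\<in>U. var i) ^ k \<in> (J_ideal n :: 'k::field_char_0 mpoly set)"
  using assms
proof (induction U arbitrary: k rule: finite_induct)
  case empty
  then show ?case by (simp add: power_0_left)
next
  case (insert a U)
  have a: "a \<in> {1..n}" and U: "U \<subseteq> {1..n}" using insert by auto
  have LU: "(\<Sum>i\<in>U. var i) \<in> (polyR n :: 'k mpoly set)" using U by (intro polyR_sum polyR_var) auto
  obtain c where c: "c \<in> polyR n"
    "((\<Sum>i\<in>U. var i) + var a) ^ k = (\<Sum>i\<in>U. var i) ^ k + of_nat k * var a * (\<Sum>i\<in>U. var i) ^ (k - 1) + (var a)\<^sup>2 * (c :: 'k mpoly)"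
    using binom2[OF LU polyR_var[OF a]] by blast
  have k: "card U < k" "card U < k - 1" using insert by auto
  have "(\<Sum>i\<in>insert a U. var i) ^ k = (\<Sum>i\<in>U. var i) ^ k + of_nat k * var a * (\<Sum>i\<in>U. var i) ^ (k - 1) + c * (var a)\<^sup>2"
    using c insert by (simp add: add.commute mult.commute)
  moreover have "(\<Sum>i\<in>U. var i) ^ k \<in> (J_ideal n :: 'k mpoly set)" using insert.IH[OF U k(1)] .
  moreover have "(\<Sum>i\<in>U. var i) ^ (k - 1) \<in> (J_ideal n :: 'k mpoly set)" using insert.IH[OF U k(2)] .
  ultimately show ?case using a c by (auto intro!: J_add J_mult J_sq)
qed

lemma ell_split:
  assumes "okD n M ps"
  shows "(ell n :: 'k::field_char_0 mpoly) = (\<Sum>i\<in>M \<union> set (pflat ps). var i) + (\<Sum>i\<in>{1..n} - (M \<union> set (pflat ps)). var i)"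
proof -
  have "M \<union> set (pflat ps) \<subseteq> {1..n}" using assms by (auto simp: okD_def)
  then show ?thesis unfolding ell_def
    by (metis finite_atLeastAtMost sum.subset_diff add.commute)
qed



lemma okD_card:
  assumes "okD n M ps"
  shows "card (M \<union> set (pflat ps)) = card M + 2 * length ps"
proof -
  have "finite M" "distinct (pflat ps)" "M \<inter> set (pflat ps) = {}" using assms by (auto simp: okD_def)
  then show ?thesis by (simp add: card_Un_disjoint distinct_card)
qed

lemma Dset_K: "p \<in> Dset n d \<Longrightarrow> p \<in> (colon_ideal n d :: 'k::field_char_0 mpoly set)"
proof -
  assume "p \<in> Dset n d"
  then obtain M ps where p: "p = Dg M ps" and ok: "okD n M ps" and cnt: "n < card M + 2 * length ps + d"
    by (auto simp: Dset_def)
  define F where "F = M \<union> set (pflat ps)"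
  define U where "U = {1..n} - F"
  have F: "F \<subseteq> {1..n}" "finite F" using ok by (auto simp: okD_def F_def)
  have "card U = n - card F" using F by (simp add: U_def card_Diff_subset)
  moreover have cF: "card F = card M + 2 * length ps" using okD_card[OF ok] by (simp add: F_def)
  ultimately have cardU: "card U < d"
    using cnt card_mono[OF _ F(1)] by simp
  have D: "Dg M ps \<in> (polyR n :: 'k mpoly set)" using ok by (rule Dg_polyR)
  have LF: "(\<Sum>i\<in>F. var i) \<in> (polyR n :: 'k mpoly set)" using F by (intro polyR_sum polyR_var) auto
  have LU: "(\<Sum>i\<in>U. var i) \<in> (polyR n :: 'k mpoly set)" by (intro polyR_sum polyR_var) (auto simp: U_def)
  have ell: "(ell n :: 'k mpoly) = (\<Sum>i\<in>F. var i) + (\<Sum>i\<in>U. var i)"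
    using ell_split[OF ok] by (simp add: F_def U_def)
  have "Dg M ps * (ell n - (\<Sum>i\<in>U. var i)) \<in> (J_ideal n :: 'k mpoly set)"
    using Dg_absorb[OF ok] by (simp add: ell F_def)
  then have "Dg M ps * ell n ^ d - Dg M ps * (\<Sum>i\<in>U. var i) ^ d \<in> (J_ideal n :: 'k mpoly set)"
    using D LU by (intro pow_congr) auto
  moreover have "Dg M ps * (\<Sum>i\<in>U. var i) ^ d \<in> (J_ideal n :: 'k mpoly set)"
    using ellU_pow[of U n d] cardU D by (intro J_mult) (auto simp: U_def)
  ultimately have "Dg M ps * ell n ^ d \<in> (J_ideal n :: 'k mpoly set)"
    using J_add by fastforce
  then show ?thesis using p D by (simp add: colon_ideal_def)
qed

lemma W_K: "W n d \<subseteq> (colon_ideal n d :: 'k::field_char_0 mpoly set)"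
  unfolding W_def
proof (rule ideal_gen_least)
  show "J_gens n \<union> Dset n d \<subseteq> (colon_ideal n d :: 'k mpoly set)"
  proof
    fix g :: "'k mpoly" assume "g \<in> J_gens n \<union> Dset n d"
    then show "g \<in> colon_ideal n d"
    proof
      assume "g \<in> J_gens n"
      then show ?thesis unfolding J_ideal_def by (intro J_K) (simp add: J_ideal_def ideal_gen_gen)
    next
      assume "g \<in> Dset n d" then show ?thesis by (rule Dset_K)
    qed
  qed
qed (auto intro: K_add K_mult J_K)

lemma J_W: "p \<in> J_ideal n \<Longrightarrow> p \<in> W n d"
  unfolding J_ideal_def W_def using ideal_gen_mono[of "J_gens n" "J_gens n \<union> Dset n d" n n] by blast

lemma W_add: "p \<in> W n d \<Longrightarrow> q \<in> W n d \<Longrightarrow> p + q \<in> W n d"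
  unfolding W_def by (rule ideal_gen_add)
lemma W_diff: "p \<in> W n d \<Longrightarrow> q \<in> W n d \<Longrightarrow> p - q \<in> W n d"
  unfolding W_def by (rule ideal_gen_diff)
lemma W_mult: "p \<in> W n d \<Longrightarrow> r \<in> polyR n \<Longrightarrow> r * p \<in> W n d"
  unfolding W_def by (rule ideal_gen_mult)
lemma W_zero[simp]: "0 \<in> W n d"
  unfolding W_def by simp
lemma W_sum: "(\<And>i. i \<in> A \<Longrightarrow> f i \<in> W n d) \<Longrightarrow> sum f A \<in> W n d"
  unfolding W_def by (rule ideal_gen_sum)
lemma Dset_W: "p \<in> Dset n d \<Longrightarrow> p \<in> W n d"
  unfolding W_def by (rule ideal_gen_gen) simp

lemma W_dec: "0 < d \<Longrightarrow> W N (d - 1) \<subseteq> (W (Suc N) d :: 'k::field_char_0 mpoly set)"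
  unfolding W_def
proof (rule ideal_gen_mono)
  assume d: "0 < d"
  show "J_gens N \<union> Dset N (d - 1) \<subseteq> (J_gens (Suc N) \<union> Dset (Suc N) d :: 'k mpoly set)"
  proof -
    have "J_gens N \<subseteq> (J_gens (Suc N) :: 'k mpoly set)" by (auto simp: J_gens_def)
    moreover have "Dset N (d - 1) \<subseteq> (Dset (Suc N) d :: 'k mpoly set)"
    proof
      fix x :: "'k mpoly" assume "x \<in> Dset N (d - 1)"
      then obtain M ps where x: "x = Dg M ps" and ok: "okD N M ps" and cnt: "N < card M + 2 * length ps + (d - 1)"
        by (auto simp: Dset_def)
      have "okD (Suc N) M ps" using ok by (auto simp: okD_def)
      moreover have "Suc N < card M + 2 * length ps + d" using cnt d by simp
      ultimately show "x \<in> Dset (Suc N) d" unfolding Dset_def using x by blast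
    qed
    ultimately show ?thesis by blast
  qed
qed simp

lemma W_xn: "w \<in> W N d \<Longrightarrow> var (Suc N) * w \<in> (W (Suc N) d :: 'k::field_char_0 mpoly set)"
proof -
  assume w: "w \<in> W N d"
  have "W N d \<subseteq> {w :: 'k mpoly. var (Suc N) * w \<in> W (Suc N) d}"
    unfolding W_def[of N]
  proof (rule ideal_gen_least)
    show "J_gens N \<union> Dset N d \<subseteq> {w :: 'k mpoly. var (Suc N) * w \<in> W (Suc N) d}"
    proof
      fix g :: "'k mpoly" assume "g \<in> J_gens N \<union> Dset N d"
      then show "g \<in> {w. var (Suc N) * w \<in> W (Suc N) d}"
      proof
        assume "g \<in> J_gens N"
        then obtain i where i: "i \<in> {1..N}" "g = (var i)\<^sup>2" by (auto simp: J_gens_def)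
        have "var (Suc N) * (var i)\<^sup>2 \<in> (J_ideal (Suc N) :: 'k mpoly set)"
          using i by (intro J_sq) auto
        then have "var (Suc N) * g \<in> J_ideal (Suc N)" using i by simp
        then show ?thesis by (simp add: J_W)
      next
        assume "g \<in> Dset N d"
        then obtain M ps where g: "g = Dg M ps" and ok: "okD N M ps" and cnt: "N < card M + 2 * length ps + d"
          by (auto simp: Dset_def)
        have nM: "Suc N \<notin> M" using ok by (auto simp: okD_def)
        have "var (Suc N) * g = Dg (insert (Suc N) M) ps"
          using ok nM by (simp add: g Dg_def okD_def mult.assoc)
        moreover have "okD (Suc N) (insert (Suc N) M) ps" using ok by (auto simp: okD_def)
        moreover have "Suc N < card (insert (Suc N) M) + 2 * length ps + d"
          using ok nM cnt by (simp add: okD_def)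
        ultimately have "var (Suc N) * g \<in> Dset (Suc N) d" by (auto simp: Dset_def)
        then show ?thesis by (simp add: Dset_W)
      qed
    qed
  next
    show "0 \<in> {w :: 'k mpoly. var (Suc N) * w \<in> W (Suc N) d}" by simp
  next
    fix p q :: "'k mpoly"
    assume "p \<in> {w. var (Suc N) * w \<in> W (Suc N) d}" "q \<in> {w. var (Suc N) * w \<in> W (Suc N) d}"
    then show "p + q \<in> {w. var (Suc N) * w \<in> W (Suc N) d}" by (simp add: distrib_left W_add)
  next
    fix r p :: "'k mpoly"
    assume r: "r \<in> polyR N" and "p \<in> {w. var (Suc N) * w \<in> W (Suc N) d}"
    then have "r * (var (Suc N) * p) \<in> W (Suc N) d" by (rule_tac W_mult) (auto intro: polyR_mono[of N "Suc N"])
    then show "r * p \<in> {w. var (Suc N) * w \<in> W (Suc N) d}" by (simp add: algebra_simps)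
  qed
  then show ?thesis using w by blast
qed



lemma W_lift:
  assumes "h \<in> W N (Suc d)"
  shows "\<exists>h'' \<in> polyR N. ell N * h - var (Suc N) * h'' \<in> (W (Suc N) d :: 'k::field_char_0 mpoly set)"
proof -
  let ?x = "var (Suc N) :: 'k mpoly"
  let ?I = "{h :: 'k mpoly. \<exists>h'' \<in> polyR N. ell N * h - ?x * h'' \<in> W (Suc N) d}"
  have sub: "polyR N \<subseteq> (polyR (Suc N) :: 'k mpoly set)" using polyR_mono[of N "Suc N"] by auto
  have "W N (Suc d) \<subseteq> ?I"
    unfolding W_def[of N]
  proof (rule ideal_gen_least)
    show "J_gens N \<union> Dset N (Suc d) \<subseteq> ?I"
    proof
      fix g :: "'k mpoly" assume "g \<in> J_gens N \<union> Dset N (Suc d)"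
      then show "g \<in> ?I"
      proof
        assume "g \<in> J_gens N"
        then obtain i where i: "i \<in> {1..N}" "g = (var i)\<^sup>2" by (auto simp: J_gens_def)
        have "ell N * (var i)\<^sup>2 \<in> (J_ideal (Suc N) :: 'k mpoly set)"
          using i sub by (intro J_sq) auto
        then have "ell N * g - ?x * 0 \<in> W (Suc N) d" using i by (simp add: J_W)
        then show ?thesis using polyR_zero by blast
      next
        assume "g \<in> Dset N (Suc d)"
        then obtain M ps where g: "g = Dg M ps" and ok: "okD N M ps" and cnt: "N < card M + 2 * length ps + Suc d"
          by (auto simp: Dset_def)
        have okk: "finite M" "M \<subseteq> {1..N}" "distinct (pflat ps)" "set (pflat ps) \<subseteq> {1..N}" "M \<inter> set (pflat ps) = {}"
          using ok by (auto simp: okD_def)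
        define F where "F = M \<union> set (pflat ps)"
        define U where "U = {1..N} - F"
        have D: "Dg M ps \<in> (polyR N :: 'k mpoly set)" using ok by (rule Dg_polyR)
        have ell: "(ell N :: 'k mpoly) = (\<Sum>i\<in>F. var i) + (\<Sum>i\<in>U. var i)"
          using ell_split[OF ok] by (simp add: F_def U_def)
        have eq: "ell N * Dg M ps - ?x * (\<Sum>u\<in>U. Dg M ps) =
            Dg M ps * (\<Sum>i\<in>F. var i) + (\<Sum>u\<in>U. (var u - ?x) * Dg M ps)"
          by (simp add: ell algebra_simps sum_distrib_left sum_distrib_right sum_subtractf)
        have A: "Dg M ps * (\<Sum>i\<in>F. var i) \<in> (W (Suc N) d :: 'k mpoly set)"
          using Dg_absorb[OF ok] by (intro J_W J_mono[of N "Suc N"]) (auto simp: F_def)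
        have B: "(var u - ?x) * Dg M ps \<in> W (Suc N) d" if u: "u \<in> U" for u
        proof -
          have uu: "u \<in> {1..N}" "u \<notin> M" "u \<notin> set (pflat ps)" using u by (auto simp: U_def F_def)
          have "(var u - ?x) * Dg M ps = Dg M ((u, Suc N) # ps)"
            by (simp add: Dg_def algebra_simps)
          moreover have "okD (Suc N) M ((u, Suc N) # ps)"
            using okk uu unfolding okD_def by auto
          moreover have "Suc N < card M + 2 * length ((u, Suc N) # ps) + d" using cnt by simp
          ultimately have "(var u - ?x) * Dg M ps \<in> Dset (Suc N) d" unfolding Dset_def by blast
          then show ?thesis by (rule Dset_W)
        qed
        have "ell N * g - ?x * (\<Sum>u\<in>U. Dg M ps) \<in> W (Suc N) d"
          unfolding g eq using A B by (intro W_add W_sum) auto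
        moreover have "(\<Sum>u\<in>U. Dg M ps) \<in> (polyR N :: 'k mpoly set)" using D by (intro polyR_sum)
        ultimately show ?thesis by blast
      qed
    qed
  next
    show "0 \<in> ?I" by (rule CollectI, rule bexI[of _ 0]) simp_all
  next
    fix p q :: "'k mpoly" assume "p \<in> ?I" "q \<in> ?I"
    then obtain hp hq where "hp \<in> polyR N" "ell N * p - ?x * hp \<in> W (Suc N) d"
      "hq \<in> polyR N" "ell N * q - ?x * hq \<in> W (Suc N) d" by blast
    moreover have "ell N * (p + q) - ?x * (hp + hq) = (ell N * p - ?x * hp) + (ell N * q - ?x * hq)"
      by (simp add: algebra_simps)
    ultimately show "p + q \<in> ?I" by (intro CollectI bexI[of _ "hp + hq"]) (auto intro: W_add)
  next
    fix r p :: "'k mpoly" assume r: "r \<in> polyR N" and "p \<in> ?I"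
    then obtain hp where hp: "hp \<in> polyR N" "ell N * p - ?x * hp \<in> W (Suc N) d" by blast
    have "r * (ell N * p - ?x * hp) \<in> W (Suc N) d" using hp r sub by (intro W_mult) auto
    moreover have "r * (ell N * p - ?x * hp) = ell N * (r * p) - ?x * (r * hp)" by (simp add: algebra_simps)
    ultimately show "r * p \<in> ?I" using r hp by (intro CollectI bexI[of _ "r * hp"]) auto
  qed
  then show ?thesis using assms by blast
qed



lemma const_inv_mult:
  assumes "(c::'k::field_char_0) \<noteq> 0"
  shows "Poly_Mapping.single 0 (inverse c) * (Poly_Mapping.single 0 c * f) = (f :: 'k mpoly)"
proof -
  have "Poly_Mapping.single 0 (inverse c) * Poly_Mapping.single 0 c = (1 :: 'k mpoly)"
    using assms by (simp add: mult_single)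
  then show ?thesis by (simp add: mult.assoc[symmetric])
qed

lemma K_sub_W: "colon_ideal n d \<subseteq> (W n d :: 'k::field_char_0 mpoly set)"
proof (induction n arbitrary: d)
  case 0
  show ?case
  proof
    fix f :: "'k mpoly" assume f: "f \<in> colon_ideal 0 d"
    show "f \<in> W 0 d"
    proof (cases d)
      case 0
      then show ?thesis using f by (simp add: colon_ideal_def J_W)
    next
      case (Suc e)
      have "okD 0 {} []" by (simp add: okD_def)
      then have "Dg {} [] \<in> (Dset 0 d :: 'k mpoly set)" unfolding Dset_def using Suc by force
      then have "(1 :: 'k mpoly) \<in> W 0 d" by (simp add: Dg_def Dset_W)
      then have "f * 1 \<in> W 0 d" using f by (intro W_mult) (simp_all add: colon_ideal_def)
      then show ?thesis by simp
    qed
  qed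
next
  case (Suc N)
  show ?case
  proof
    fix f :: "'k mpoly" assume f: "f \<in> colon_ideal (Suc N) d"
    show "f \<in> W (Suc N) d"
    proof (cases d)
      case 0
      then show ?thesis using f by (simp add: colon_ideal_def J_W)
    next
      case (Suc e)
      let ?x = "var (Suc N) :: 'k mpoly"
      let ?L = "ell N :: 'k mpoly"
      let ?n = "Suc N"
      have sub: "polyR N \<subseteq> (polyR (Suc N) :: 'k mpoly set)" using polyR_mono[of N "Suc N"] by auto
      have fR: "f \<in> polyR ?n" and fJ: "f * ell ?n ^ d \<in> J_ideal ?n" using f by (auto simp: colon_ideal_def)
      obtain g h0 h1 where gh: "g \<in> polyR N" "h0 \<in> polyR N" "h1 \<in> polyR ?n"
        "f = g + ?x * h0 + ?x\<^sup>2 * h1"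
        using polyR_decomp[OF fR] by blast
      have LR: "?L \<in> polyR N" by simp
      have LRn: "?L \<in> polyR ?n" using sub by auto
      have xR: "?x \<in> polyR ?n" by (rule polyR_var) simp
      have gR: "g \<in> polyR ?n" "h0 \<in> polyR ?n" using gh sub by auto
      obtain c where c: "c \<in> polyR ?n" "(?L + ?x) ^ d = ?L ^ d + of_nat d * ?x * ?L ^ e + ?x\<^sup>2 * c"
        using binom2[OF LRn xR, of d] Suc by auto
      define Q where "Q = g * c + h0 * (of_nat d * ?L ^ e) + h0 * ?x * c + h1 * (?L + ?x) ^ d"
      have QR: "Q \<in> polyR ?n" using c gR gh(3) LRn xR by (simp add: Q_def)
      have expand: "f * ell ?n ^ d = (g * ?L ^ d + ?x * (h0 * ?L ^ d + of_nat d * g * ?L ^ e)) + ?x\<^sup>2 * Q"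
        unfolding ell_Suc c(2) gh(4) Q_def by (simp add: algebra_simps power2_eq_square)
      have "?x\<^sup>2 * Q \<in> J_ideal ?n" using J_sq[OF _ QR, of ?n] by (simp add: mult.commute)
      then have "(g * ?L ^ d + ?x * (h0 * ?L ^ d + of_nat d * g * ?L ^ e)) \<in> J_ideal ?n"
        using J_diff[OF fJ] expand by fastforce
      then have AB: "g * ?L ^ d \<in> J_ideal N" "h0 * ?L ^ d + of_nat d * g * ?L ^ e \<in> J_ideal N"
        using J_split[of "g * ?L ^ d" N "h0 * ?L ^ d + of_nat d * g * ?L ^ e"] gh LR by auto
      define u where "u = h0 * ?L + of_nat d * g"
      have uR: "u \<in> polyR N" using gh by (simp add: u_def)
      have "u * ell N ^ e = h0 * ?L ^ d + of_nat d * g * ?L ^ e"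
        using Suc by (simp add: u_def algebra_simps)
      then have "u \<in> colon_ideal N e" using uR AB by (simp add: colon_ideal_def)
      then have "u \<in> W N e" using Suc.IH by blast
      then have uW: "u \<in> W ?n d" using W_dec[of d N] Suc by auto
      have "h0 * ell N ^ Suc d = ?L * (h0 * ?L ^ d + of_nat d * g * ?L ^ e) - of_nat d * (g * ?L ^ d)"
        using Suc by (simp add: algebra_simps)
      moreover have "?L * (h0 * ?L ^ d + of_nat d * g * ?L ^ e) \<in> J_ideal N" using AB(2) LR by (rule J_mult)
      moreover have "of_nat d * (g * ?L ^ d) \<in> J_ideal N" using AB(1) by (rule J_mult) simp
      ultimately have "h0 * ell N ^ Suc d \<in> J_ideal N" by (simp add: J_diff)
      then have "h0 \<in> colon_ideal N (Suc d)" using gh by (simp add: colon_ideal_def)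
      then have "h0 \<in> W N (Suc d)" using Suc.IH by blast
      then obtain h2 where h2: "h2 \<in> polyR N" "?L * h0 - ?x * h2 \<in> W ?n d"
        using W_lift by blast
      define w1 where "w1 = u - (?L * h0 - ?x * h2)"
      define h' where "h' = of_nat d * h0 - h2"
      have w1W: "w1 \<in> W ?n d" using uW h2 by (simp add: w1_def W_diff)
      have h'R: "h' \<in> polyR N" using gh h2 by (simp add: h'_def)
      have df: "of_nat d * f = w1 + ?x * h' + ?x\<^sup>2 * (of_nat d * h1)"
        unfolding gh(4) w1_def h'_def u_def by (simp add: algebra_simps)
      have x2J: "?x\<^sup>2 * (of_nat d * h1) \<in> J_ideal ?n"
        using J_sq[of ?n ?n "of_nat d * h1"] gh by (simp add: mult.commute)
      have "?x * h' = of_nat d * f - w1 - ?x\<^sup>2 * (of_nat d * h1)" using df by simp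
      moreover have "of_nat d * f \<in> colon_ideal ?n d" using f by (intro K_mult) simp_all
      moreover have "w1 \<in> colon_ideal ?n d" using w1W W_K by blast
      moreover have "?x\<^sup>2 * (of_nat d * h1) \<in> colon_ideal ?n d" using x2J by (rule J_K)
      ultimately have xh: "?x * h' \<in> colon_ideal ?n d" by (simp add: K_diff)
      have h'nR: "h' \<in> polyR ?n" using h'R sub by auto
      define Q2 where "Q2 = h' * (of_nat d * ?L ^ e + ?x * c)"
      have Q2R: "Q2 \<in> polyR ?n" using h'nR LRn xR c by (simp add: Q2_def)
      have "?x * h' * ell ?n ^ d = ?x * (h' * ?L ^ d) + ?x\<^sup>2 * Q2"
        unfolding ell_Suc c(2) Q2_def by (simp add: algebra_simps power2_eq_square)
      moreover have "?x\<^sup>2 * Q2 \<in> J_ideal ?n" using J_sq[OF _ Q2R, of ?n] by (simp add: mult.commute)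
      moreover have "?x * h' * ell ?n ^ d \<in> J_ideal ?n" using xh by (simp add: colon_ideal_def)
      ultimately have "0 + ?x * (h' * ?L ^ d) \<in> J_ideal ?n" using J_diff by fastforce
      then have "h' * ?L ^ d \<in> J_ideal N" using J_split[of 0 N "h' * ?L ^ d"] h'R LR by auto
      then have "h' \<in> colon_ideal N d" using h'R by (simp add: colon_ideal_def)
      then have "h' \<in> W N d" using Suc.IH by blast
      then have xhW: "?x * h' \<in> W ?n d" by (rule W_xn)
      have "of_nat d * f \<in> W ?n d"
        unfolding df using w1W xhW J_W[OF x2J] by (intro W_add)
      then have "Poly_Mapping.single 0 (inverse (of_nat d)) * (of_nat d * f) \<in> W ?n d"
        by (rule W_mult) simp
      moreover have "d \<noteq> 0" using Suc by simp
      then have "(of_nat d :: 'k) \<noteq> 0" by simp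
      then have "Poly_Mapping.single 0 (inverse (of_nat d)) * (of_nat d * f) = f"
        using const_inv_mult[of "of_nat d :: 'k" f] by simp
      ultimately show ?thesis by simp
    qed
  qed
qed

theorem K_eq_W: "colon_ideal n d = (W n d :: 'k::field_char_0 mpoly set)"
  using K_sub_W W_K by blast



section \<open>Permutation action\<close>

definition pmono :: "(nat \<Rightarrow> nat) \<Rightarrow> (nat \<Rightarrow>\<^sub>0 nat) \<Rightarrow> 'k::field_char_0 mpoly" where
  "pmono \<sigma> m = (\<Prod>i \<in> Poly_Mapping.keys m. var (\<sigma> i) ^ Poly_Mapping.lookup m i)"

lemma perm_act_pmono: "perm_act \<sigma> p = (\<Sum>m \<in> Poly_Mapping.keys p. Poly_Mapping.single 0 (Poly_Mapping.lookup p m) * pmono \<sigma> m)"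
  by (simp add: perm_act_def pmono_def)

lemma perm_act_superset:
  assumes "finite S" "Poly_Mapping.keys p \<subseteq> S"
  shows "perm_act \<sigma> (p :: 'k::field_char_0 mpoly) = (\<Sum>m \<in> S. Poly_Mapping.single 0 (Poly_Mapping.lookup p m) * pmono \<sigma> m)"
  unfolding perm_act_pmono
  by (rule sum.mono_neutral_left) (use assms in \<open>auto simp: in_keys_iff\<close>)

lemma pmono_superset:
  assumes "finite S" "Poly_Mapping.keys m \<subseteq> S"
  shows "pmono \<sigma> m = (\<Prod>i \<in> S. (var (\<sigma> i) :: 'k::field_char_0 mpoly) ^ Poly_Mapping.lookup m i)"
  unfolding pmono_def
  by (rule prod.mono_neutral_left) (use assms in \<open>auto simp: in_keys_iff\<close>)

lemma pmono_add: "pmono \<sigma> (m1 + m2) = (pmono \<sigma> m1 * pmono \<sigma> m2 :: 'k::field_char_0 mpoly)"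
proof -
  let ?S = "Poly_Mapping.keys m1 \<union> Poly_Mapping.keys m2"
  have "pmono \<sigma> (m1 + m2) = (\<Prod>i \<in> ?S. (var (\<sigma> i) :: 'k mpoly) ^ Poly_Mapping.lookup (m1 + m2) i)"
    using keys_add[of m1 m2] by (intro pmono_superset) auto
  also have "\<dots> = (\<Prod>i \<in> ?S. (var (\<sigma> i) :: 'k mpoly) ^ Poly_Mapping.lookup m1 i) * (\<Prod>i \<in> ?S. (var (\<sigma> i) :: 'k mpoly) ^ Poly_Mapping.lookup m2 i)"
    by (simp add: lookup_add power_add prod.distrib)
  also have "\<dots> = pmono \<sigma> m1 * pmono \<sigma> m2"
    by (subst (1 2) pmono_superset[of ?S]) auto
  finally show ?thesis .
qed

lemma perm_act_add: "perm_act \<sigma> (p + q) = perm_act \<sigma> p + perm_act \<sigma> (q :: 'k::field_char_0 mpoly)"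
proof -
  let ?S = "Poly_Mapping.keys p \<union> Poly_Mapping.keys q"
  have "perm_act \<sigma> (p + q) = (\<Sum>m \<in> ?S. Poly_Mapping.single 0 (Poly_Mapping.lookup (p + q) m) * pmono \<sigma> m)"
    using keys_add[of p q] by (intro perm_act_superset) auto
  also have "\<dots> = (\<Sum>m \<in> ?S. Poly_Mapping.single 0 (Poly_Mapping.lookup p m) * pmono \<sigma> m) + (\<Sum>m \<in> ?S. Poly_Mapping.single 0 (Poly_Mapping.lookup q m) * pmono \<sigma> m)"
    by (simp add: lookup_add single_add distrib_right sum.distrib)
  also have "\<dots> = perm_act \<sigma> p + perm_act \<sigma> q"
    by (subst (1 2) perm_act_superset[of ?S]) auto
  finally show ?thesis .
qed

lemma perm_act_zero[simp]: "perm_act \<sigma> (0 :: 'k::field_char_0 mpoly) = 0"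
  by (simp add: perm_act_def)

lemma perm_act_sum: "perm_act \<sigma> (sum f A) = (\<Sum>a\<in>A. perm_act \<sigma> (f a :: 'k::field_char_0 mpoly))"
  by (induction A rule: infinite_finite_induct) (auto simp: perm_act_add)

lemma perm_act_single: "perm_act \<sigma> (Poly_Mapping.single m c) = Poly_Mapping.single 0 c * (pmono \<sigma> m :: 'k::field_char_0 mpoly)"
  by (subst perm_act_superset[of "{m}"]) auto

lemma perm_act_single_mult:
  "perm_act \<sigma> (Poly_Mapping.single m1 a * Poly_Mapping.single m2 b) =
   perm_act \<sigma> (Poly_Mapping.single m1 a) * perm_act \<sigma> (Poly_Mapping.single m2 (b :: 'k::field_char_0))"
  by (simp add: mult_single perm_act_single pmono_add algebra_simps)

lemma perm_act_mult: "perm_act \<sigma> (p * q) = perm_act \<sigma> p * perm_act \<sigma> (q :: 'k::field_char_0 mpoly)"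
proof -
  have "p * q = (\<Sum>m2\<in>Poly_Mapping.keys q. \<Sum>m1\<in>Poly_Mapping.keys p.
      Poly_Mapping.single m1 (Poly_Mapping.lookup p m1) * Poly_Mapping.single m2 (Poly_Mapping.lookup q m2))"
    by (subst (1) poly_mapping_expand[of p], subst (1) poly_mapping_expand[of q]) (simp add: sum_distrib_left sum_distrib_right)
  then have "perm_act \<sigma> (p * q) = (\<Sum>m2\<in>Poly_Mapping.keys q. \<Sum>m1\<in>Poly_Mapping.keys p.
      perm_act \<sigma> (Poly_Mapping.single m1 (Poly_Mapping.lookup p m1)) * perm_act \<sigma> (Poly_Mapping.single m2 (Poly_Mapping.lookup q m2)))"
    by (simp add: perm_act_sum perm_act_single_mult)
  also have "\<dots> = perm_act \<sigma> (\<Sum>m1\<in>Poly_Mapping.keys p. Poly_Mapping.single m1 (Poly_Mapping.lookup p m1)) *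
      perm_act \<sigma> (\<Sum>m2\<in>Poly_Mapping.keys q. Poly_Mapping.single m2 (Poly_Mapping.lookup q m2))"
    by (simp add: perm_act_sum sum_distrib_left sum_distrib_right)
  also have "\<dots> = perm_act \<sigma> p * perm_act \<sigma> q"
    by (simp only: poly_mapping_expand[symmetric])
  finally show ?thesis .
qed

lemma perm_act_uminus: "perm_act \<sigma> (- p) = - perm_act \<sigma> (p :: 'k::field_char_0 mpoly)"
  using perm_act_add[of \<sigma> p "-p"] by (simp add: add_eq_0_iff)

lemma perm_act_diff: "perm_act \<sigma> (p - q) = perm_act \<sigma> p - perm_act \<sigma> (q :: 'k::field_char_0 mpoly)"
  using perm_act_add[of \<sigma> p "-q"] by (simp add: perm_act_uminus)

lemma perm_act_one[simp]: "perm_act \<sigma> (1 :: 'k::field_char_0 mpoly) = 1"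
  using perm_act_single[of \<sigma> 0 "1::'k"] by (simp add: pmono_def)

lemma perm_act_var[simp]: "perm_act \<sigma> (var i :: 'k::field_char_0 mpoly) = var (\<sigma> i)"
  unfolding var_def[of i] perm_act_single by (simp add: pmono_def var_def[symmetric])

lemma perm_act_prod: "perm_act \<sigma> (prod f A) = (\<Prod>a\<in>A. perm_act \<sigma> (f a :: 'k::field_char_0 mpoly))"
  by (induction A rule: infinite_finite_induct) (auto simp: perm_act_mult)

lemma perm_act_pp: "perm_act \<sigma> (pp ps :: 'k::field_char_0 mpoly) = pp (map (\<lambda>(a,b). (\<sigma> a, \<sigma> b)) ps)"
  by (induction ps) (auto simp: perm_act_mult perm_act_diff)

lemma perm_act_Dg:
  assumes "inj_on \<sigma> M"
  shows "perm_act \<sigma> (Dg M ps :: 'k::field_char_0 mpoly) = Dg (\<sigma> ` M) (map (\<lambda>(a,b). (\<sigma> a, \<sigma> b)) ps)"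
  using assms by (simp add: Dg_def perm_act_mult perm_act_prod perm_act_pp prod.reindex)

lemma pflat_map: "pflat (map (\<lambda>(a,b). (\<sigma> a, \<sigma> b)) ps) = map \<sigma> (pflat ps)"
  by (induction ps) auto

lemma pflat_inj: "pflat ps = pflat qs \<Longrightarrow> ps = qs"
proof (induction ps arbitrary: qs)
  case Nil
  then show ?case by (cases qs) auto
next
  case (Cons p ps)
  then show ?case
    by (cases qs; cases p) (auto split: prod.splits)
qed

lemma okD_perm:
  assumes "okD n M ps" "\<sigma> permutes {1..n}"
  shows "okD n (\<sigma> ` M) (map (\<lambda>(a,b). (\<sigma> a, \<sigma> b)) ps)"
proof -
  have inj: "inj \<sigma>" using assms(2) by (rule permutes_inj)
  have img: "\<sigma> ` {1..n} = {1..n}" using assms(2) by (rule permutes_image)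
  have ok: "finite M" "M \<subseteq> {1..n}" "distinct (pflat ps)" "set (pflat ps) \<subseteq> {1..n}" "M \<inter> set (pflat ps) = {}"
    using assms(1) by (auto simp: okD_def)
  have "\<sigma> ` M \<subseteq> {1..n}" using ok(2) img by blast
  moreover have "distinct (map \<sigma> (pflat ps))" using ok(3) inj by (simp add: distinct_map inj_on_def)
  moreover have "set (map \<sigma> (pflat ps)) \<subseteq> {1..n}" using ok(4) img by auto
  moreover have "\<sigma> ` M \<inter> set (map \<sigma> (pflat ps)) = {}"
    using ok(5) inj by (auto simp: inj_def)
  ultimately show ?thesis using ok(1) unfolding okD_def pflat_map by auto
qed



definition std :: "nat \<Rightarrow> (nat \<times> nat) list" where
  "std k = map (\<lambda>i. (2*i - 1, 2*i)) [1..<Suc k]"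

lemma pflat_append[simp]: "pflat (xs @ ys) = pflat xs @ pflat ys"
  by (simp add: pflat_def)

lemma pp_append[simp]: "pp (xs @ ys) = pp xs * (pp ys :: 'k::field_char_0 mpoly)"
  by (simp add: pp_def)

lemma std_Suc: "std (Suc k) = std k @ [(2 * k + 1, 2 * k + 2)]"
  by (simp add: std_def)

lemma pflat_std: "pflat (std k) = [1..<2*k+1]"
proof (induction k)
  case 0 then show ?case by (simp add: std_def)
next
  case (Suc k)
  have "[1..<2 * Suc k + 1] = [1..<2*k+1] @ [2*k+1, 2*k+2]"
    by (simp add: upt_conv_Cons)
  then show ?case by (simp add: std_Suc Suc)
qed

lemma length_std[simp]: "length (std k) = k"
  by (simp add: std_def)

lemma pp_std: "pp (std k) = (\<Prod>i=1..k. var (2*i - 1) - (var (2*i) :: 'k::field_char_0 mpoly))"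
proof (induction k)
  case 0 then show ?case by (simp add: std_def)
next
  case (Suc k)
  then show ?case by (simp add: std_Suc prod.cl_ivl_Suc)
qed

lemma perm_of_lists:
  "distinct xs \<Longrightarrow> distinct ys \<Longrightarrow> length xs = length ys \<Longrightarrow> set xs \<subseteq> S \<Longrightarrow> set ys \<subseteq> S \<Longrightarrow>
   \<exists>\<sigma>. \<sigma> permutes S \<and> map \<sigma> xs = ys"
proof (induction xs arbitrary: ys)
  case Nil
  then show ?case using permutes_id by fastforce
next
  case (Cons x xs)
  then obtain y ys' where ys: "ys = y # ys'" by (cases ys) auto
  then obtain \<tau> where \<tau>: "\<tau> permutes S" "map \<tau> xs = ys'" using Cons by auto
  define z where "z = \<tau> x"
  have zS: "z \<in> S" using Cons.prems(4) \<tau>(1) by (simp add: z_def permutes_in_image)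
  have yS: "y \<in> S" using Cons.prems(5) ys by simp
  define \<sigma> where "\<sigma> = Transposition.transpose z y \<circ> \<tau>"
  have "\<sigma> permutes S" unfolding \<sigma>_def by (rule permutes_compose[OF \<tau>(1) permutes_swap_id[OF zS yS]])
  moreover have "\<sigma> x = y" by (simp add: \<sigma>_def z_def)
  moreover have "map \<sigma> xs = ys'"
  proof -
    have "\<sigma> w = \<tau> w" if w: "w \<in> set xs" for w
    proof -
      have "\<tau> w \<noteq> z" using w Cons.prems(1) permutes_inj[OF \<tau>(1)] by (auto simp: z_def inj_def)
      moreover have "\<tau> w \<noteq> y" using w Cons.prems(2) ys \<tau>(2) by auto
      ultimately show ?thesis by (simp add: \<sigma>_def transpose_def)
    qed
    then have "map \<sigma> xs = map \<tau> xs" by simp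
    then show ?thesis using \<tau>(2) by simp
  qed
  ultimately show ?case using ys by auto
qed

definition Pstd :: "nat \<Rightarrow> 'k::field_char_0 mpoly" where
  "Pstd r = Dg (if odd r then {r} else {}) (std (r div 2))"

lemma okD_std:
  assumes "1 \<le> r" "r \<le> n"
  shows "okD n (if odd r then {r} else {}) (std (r div 2))"
proof -
  have "2 * (r div 2) \<le> r" by simp
  then show ?thesis using assms unfolding okD_def pflat_std
    by auto
qed

lemma base_in_orbit:
  assumes r: "1 \<le> r" "r \<le> n" and ok: "okD n M ps" and cM: "card M = r mod 2" and lp: "length ps = r div 2"
  shows "Dg M ps \<in> (Sn_orbit n (Pstd r) :: 'k::field_char_0 mpoly set)"
proof -
  let ?k = "r div 2"
  let ?M0 = "if odd r then {r} else {}"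
  have okk: "finite M" "M \<subseteq> {1..n}" "distinct (pflat ps)" "set (pflat ps) \<subseteq> {1..n}" "M \<inter> set (pflat ps) = {}"
    using ok by (auto simp: okD_def)
  obtain ml where ml: "set ml = M" "distinct ml" "length ml = r mod 2"
    using okk(1) cM by (metis distinct_card finite_distinct_list)
  define xs where "xs = pflat (std ?k) @ (if odd r then [r] else [])"
  define ys where "ys = pflat ps @ ml"
  have k2: "2 * ?k + 1 = r" if "odd r" using that by presburger
  have k2': "2 * ?k = r" if "even r" using that by presburger
  have "distinct xs" using k2 by (auto simp: xs_def pflat_std)
  moreover have "distinct ys" using okk ml by (auto simp: ys_def)
  moreover have "length xs = length ys"
  proof -
    have "length xs = 2 * ?k + (if odd r then 1 else 0)" by (simp add: xs_def pflat_std) presburger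
    moreover have "length ys = 2 * ?k + r mod 2" using ml lp by (simp add: ys_def)
    moreover have "(if odd r then 1 else 0) = r mod 2" by presburger
    ultimately show ?thesis by simp
  qed
  moreover have "set xs \<subseteq> {1..n}" using r k2 k2' by (auto simp: xs_def pflat_std)
  moreover have "set ys \<subseteq> {1..n}" using okk ml by (auto simp: ys_def)
  ultimately obtain \<sigma> where \<sigma>: "\<sigma> permutes {1..n}" "map \<sigma> xs = ys"
    using perm_of_lists by blast
  have inj: "inj \<sigma>" using \<sigma>(1) by (rule permutes_inj)
  have a1: "map \<sigma> (pflat (std ?k)) @ map \<sigma> (if odd r then [r] else []) = pflat ps @ ml"
    using \<sigma>(2) by (simp only: xs_def ys_def map_append)
  have a2: "length (map \<sigma> (pflat (std ?k))) = length (pflat ps)" using lp by simp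
  have "map \<sigma> (pflat (std ?k)) = pflat ps \<and> map \<sigma> (if odd r then [r] else []) = ml"
    using append_eq_append_conv[OF disjI1[OF a2]] a1 by blast
  then have e1: "pflat (map (\<lambda>(a,b). (\<sigma> a, \<sigma> b)) (std ?k)) = pflat ps" and e2: "map \<sigma> (if odd r then [r] else []) = ml"
    by (auto simp: pflat_map)
  have "map (\<lambda>(a,b). (\<sigma> a, \<sigma> b)) (std ?k) = ps" using e1 by (rule pflat_inj)
  moreover have "\<sigma> ` ?M0 = M" using e2 ml(1) by (cases "odd r") auto
  ultimately have "perm_act \<sigma> (Pstd r) = (Dg M ps :: 'k mpoly)"
    using inj by (simp add: Pstd_def perm_act_Dg inj_on_def)
  then show ?thesis unfolding Sn_orbit_def mem_Collect_eq
    by (intro exI[of _ \<sigma>] conjI) (simp_all add: \<sigma>(1)[simplified])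
qed



lemma okD_prefix:
  assumes "okD n M (ps0 @ ps1)" "M' \<subseteq> M \<union> set (pflat ps1)"
  shows "okD n M' ps0"
proof -
  have ok: "finite M" "M \<subseteq> {1..n}" "distinct (pflat ps0 @ pflat ps1)" "set (pflat ps0 @ pflat ps1) \<subseteq> {1..n}"
    "M \<inter> set (pflat ps0 @ pflat ps1) = {}"
    using assms(1) by (auto simp: okD_def)
  have "finite M'" using assms(2) ok(1) by (meson finite_Un finite_set finite_subset)
  moreover have "M' \<subseteq> {1..n}" using assms(2) ok(2,4) by auto
  moreover have "distinct (pflat ps0)" using ok(3) by simp
  moreover have "set (pflat ps0) \<subseteq> {1..n}" using ok(4) by simp
  moreover have "M' \<inter> set (pflat ps0) = {}" using assms(2) ok(3,5) by auto
  ultimately show ?thesis by (simp add: okD_def)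
qed

lemma reduce:
  fixes I :: "'k::field_char_0 mpoly set"
  assumes I: "I = ideal_gen n T" "J_gens n \<subseteq> T"
    and base: "\<And>M ps. okD n M ps \<Longrightarrow> card M = r mod 2 \<Longrightarrow> length ps = r div 2 \<Longrightarrow> Dg M ps \<in> I"
  shows "okD n M ps \<Longrightarrow> r \<le> card M + 2 * length ps \<Longrightarrow> Dg M ps \<in> I"
proof (induction "card M" arbitrary: M ps rule: less_induct)
  case less
  note ok = less.prems(1) and cnt = less.prems(2)
  have okk: "finite M" "M \<subseteq> {1..n}" "distinct (pflat ps)" "set (pflat ps) \<subseteq> {1..n}" "M \<inter> set (pflat ps) = {}"
    using ok by (auto simp: okD_def)
  have JI: "p \<in> I" if "p \<in> J_ideal n" for p
    using that ideal_gen_mono[OF I(2), of n n] by (auto simp: I(1) J_ideal_def)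
  have Imult: "c * p \<in> I" if "p \<in> I" "c \<in> polyR n" for c p
    using that by (simp add: I(1) ideal_gen_mult)
  have Idiff: "p - q \<in> I" if "p \<in> I" "q \<in> I" for p q
    using that by (simp add: I(1) ideal_gen_diff)
  let ?k = "r div 2"
  show ?case
  proof (cases "?k \<le> length ps")
    case True
    define ps0 where "ps0 = take ?k ps"
    define ps1 where "ps1 = drop ?k ps"
    have ps: "ps = ps0 @ ps1" by (simp add: ps0_def ps1_def)
    have lps0: "length ps0 = ?k" using True by (simp add: ps0_def)
    have ok': "okD n M (ps0 @ ps1)" using ok ps by simp
    have pp1: "pp ps1 \<in> (polyR n :: 'k mpoly set)" using okk(4) by (intro pp_polyR) (auto simp: ps)
    have PM: "(\<Prod>m\<in>M. var m) \<in> (polyR n :: 'k mpoly set)" using okk(2) by (rule prodM_polyR)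
    show ?thesis
    proof (cases "even r")
      case True
      have "Dg {} ps0 \<in> I" using okD_prefix[OF ok', of "{}"] lps0 True by (intro base) auto
      moreover have "(Dg M ps :: 'k mpoly) = ((\<Prod>m\<in>M. var m) * pp ps1) * Dg {} ps0"
        by (simp add: Dg_def ps algebra_simps)
      ultimately show ?thesis using PM pp1 by (simp add: Imult)
    next
      case False
      then have r1: "r mod 2 = 1" by presburger
      show ?thesis
      proof (cases "M = {}")
        case False
        then obtain c where c: "c \<in> M" by blast
        have "Dg {c} ps0 \<in> I" using okD_prefix[OF ok', of "{c}"] lps0 r1 c by (intro base) auto
        moreover have "(Dg M ps :: 'k mpoly) = ((\<Prod>m\<in>M - {c}. var m) * pp ps1) * Dg {c} ps0"
          using c okk(1) by (simp add: Dg_def ps algebra_simps prod.remove)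
        moreover have "(\<Prod>m\<in>M - {c}. var m) \<in> (polyR n :: 'k mpoly set)" using okk(2) by (intro prodM_polyR) auto
        ultimately show ?thesis using pp1 by (simp add: Imult)
      next
        case True
        have "r = 2 * ?k + 1" using \<open>odd r\<close> by presburger
        then have "?k < length ps" using cnt True by simp
        then obtain a b ps2 where ps1: "ps1 = (a,b) # ps2"
          by (cases ps1) (auto simp: ps1_def)
        have ok'': "okD n M (ps0 @ (a,b) # ps2)" using ok' ps1 by simp
        have "Dg {a} ps0 \<in> I" using okD_prefix[OF ok'', of "{a}"] lps0 r1 by (intro base) auto
        moreover have "Dg {b} ps0 \<in> I" using okD_prefix[OF ok'', of "{b}"] lps0 r1 by (intro base) auto
        ultimately have "Dg {a} ps0 - Dg {b} ps0 \<in> I" by (rule Idiff)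
        moreover have "pp ps2 \<in> (polyR n :: 'k mpoly set)" using okk(4) by (intro pp_polyR) (auto simp: ps ps1)
        moreover have "(Dg M ps :: 'k mpoly) = pp ps2 * (Dg {a} ps0 - Dg {b} ps0)"
          using True by (simp add: Dg_def ps ps1 algebra_simps)
        ultimately show ?thesis by (simp add: Imult)
      qed
    qed
  next
    case False
    then have "2 \<le> card M" using cnt by linarith
    then have nle: "\<not> card M \<le> Suc 0" by simp
    have "\<not> (\<forall>a\<in>M. \<forall>b\<in>M. a = b)" using nle card_le_Suc0_iff_eq[OF okk(1)] by blast
    then obtain a b where ab: "a \<in> M" "b \<in> M" "a \<noteq> b" by blast
    define M' where "M' = M - {a, b}"
    have cM': "card M' = card M - 2" using ab okk(1) by (simp add: M'_def card_Diff_subset)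
    have ok2: "okD n M' ((a,b) # ps)"
      using okk ab unfolding okD_def M'_def by auto
    have "card M' < card M" using cM' \<open>2 \<le> card M\<close> by simp
    moreover have "r \<le> card M' + 2 * length ((a,b) # ps)" using cM' cnt \<open>2 \<le> card M\<close> by simp
    ultimately have IH: "Dg M' ((a,b) # ps) \<in> I" using less.hyps ok2 by blast

    have aR: "a \<in> {1..n}" using ab okk by auto
    have "okD n M' ps" using okk unfolding okD_def M'_def by auto
    then have D'R: "Dg M' ps \<in> (polyR n :: 'k mpoly set)" by (rule Dg_polyR)
    have "(Dg M ps :: 'k mpoly) = Dg M' ps * (var a)\<^sup>2 - var a * Dg M' ((a,b) # ps)"
    proof -
      have "M = insert a (insert b M')" using ab by (auto simp: M'_def)
      moreover have "a \<notin> insert b M'" "b \<notin> M'" "finite M'" using ab okk(1) by (auto simp: M'_def)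
      ultimately have pe: "(\<Prod>m\<in>M. var m :: 'k mpoly) = var a * var b * (\<Prod>m\<in>M'. var m)"
        by (simp add: mult.assoc)
      show ?thesis unfolding Dg_def pe pp_simps(2) by algebra
    qed
    moreover have "Dg M' ps * (var a)\<^sup>2 \<in> I" using J_sq[OF aR D'R] by (rule JI)
    moreover have "var a * Dg M' ((a,b) # ps) \<in> I" using IH aR by (intro Imult) auto
    ultimately show ?thesis by (simp add: Idiff)
  qed
qed



lemma W_orbit:
  assumes d: "0 < d" "d \<le> n"
  shows "W n d = ideal_gen n (J_gens n \<union> Sn_orbit n (Pstd (n - d + 1) :: 'k::field_char_0 mpoly))"
proof -
  define r where "r = n - d + 1"
  have r: "1 \<le> r" "r \<le> n" using d by (auto simp: r_def)
  let ?I = "ideal_gen n (J_gens n \<union> Sn_orbit n (Pstd r :: 'k mpoly))"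
  have "W n d \<subseteq> ?I"
    unfolding W_def
  proof (rule ideal_gen_sub_ideal)
    show "J_gens n \<union> Dset n d \<subseteq> ?I"
    proof
      fix x :: "'k mpoly" assume "x \<in> J_gens n \<union> Dset n d"
      then show "x \<in> ?I"
      proof
        assume "x \<in> J_gens n" then show ?thesis by (intro ideal_gen_gen) simp
      next
        assume "x \<in> Dset n d"
        then obtain M ps where x: "x = Dg M ps" and ok: "okD n M ps" and cnt: "n < card M + 2 * length ps + d"
          by (auto simp: Dset_def)
        have base: "Dg M' ps' \<in> ?I" if "okD n M' ps'" "card M' = r mod 2" "length ps' = r div 2" for M' ps'
        proof -
          have "Dg M' ps' \<in> (Sn_orbit n (Pstd r) :: 'k mpoly set)" by (rule base_in_orbit[OF r that])
          then show ?thesis by (intro ideal_gen_gen) simp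
        qed
        have "r \<le> card M + 2 * length ps" using cnt d by (simp add: r_def)
        then show ?thesis unfolding x
          using reduce[of ?I n "J_gens n \<union> Sn_orbit n (Pstd r)" r, OF refl _ base ok] by blast
      qed
    qed
  qed
  moreover have "?I \<subseteq> W n d"
    unfolding W_def[of n d]
  proof (rule ideal_gen_sub_ideal)
    show "J_gens n \<union> Sn_orbit n (Pstd r) \<subseteq> (ideal_gen n (J_gens n \<union> Dset n d) :: 'k mpoly set)"
    proof
      fix x :: "'k mpoly" assume "x \<in> J_gens n \<union> Sn_orbit n (Pstd r)"
      then show "x \<in> ideal_gen n (J_gens n \<union> Dset n d)"
      proof
        assume "x \<in> J_gens n" then show ?thesis by (intro ideal_gen_gen) simp
      next
        assume "x \<in> Sn_orbit n (Pstd r)"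
        then obtain \<sigma> where \<sigma>: "\<sigma> permutes {1..n}" "x = perm_act \<sigma> (Pstd r)"
          by (auto simp: Sn_orbit_def)
        let ?M0 = "if odd r then {r} else {}"
        let ?k = "r div 2"
        have inj: "inj \<sigma>" using \<sigma>(1) by (rule permutes_inj)
        have x: "x = Dg (\<sigma> ` ?M0) (map (\<lambda>(a,b). (\<sigma> a, \<sigma> b)) (std ?k))"
          using \<sigma>(2) inj by (simp add: Pstd_def perm_act_Dg inj_on_def)
        have ok: "okD n (\<sigma> ` ?M0) (map (\<lambda>(a,b). (\<sigma> a, \<sigma> b)) (std ?k))"
          using okD_perm[OF okD_std[OF r] \<sigma>(1)] .
        have "card (\<sigma> ` ?M0) = r mod 2" using inj by (simp add: card_image inj_on_def) presburger
        then have "n < card (\<sigma> ` ?M0) + 2 * length (map (\<lambda>(a,b). (\<sigma> a, \<sigma> b)) (std ?k)) + d"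
          using d by (simp add: r_def)
        then have "x \<in> Dset n d" unfolding Dset_def using x ok by blast
        then show ?thesis using Dset_W[of x n d] unfolding W_def by blast
      qed
    qed
  qed
  ultimately show ?thesis by (simp add: r_def)
qed

theorem mainTheorem6:
  fixes n d :: nat
  assumes "0 < d" and "d \<le> n"
  shows "(odd (n + d) \<longrightarrow>
           (colon_ideal n d :: 'k::field_char_0 mpoly set) =
           ideal_gen n (J_gens n \<union>
             Sn_orbit n (\<Prod>i=1..(n - d + 1) div 2. var (2*i - 1) - var (2*i))))
       \<and> (even (n + d) \<longrightarrow>
           (colon_ideal n d :: 'k::field_char_0 mpoly set) =
           ideal_gen n (J_gens n \<union>
             Sn_orbit n (var (n - d + 1) * (\<Prod>i=1..(n - d) div 2. var (2*i - 1) - var (2*i)))))"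
proof -
  have main: "(colon_ideal n d :: 'k mpoly set) = ideal_gen n (J_gens n \<union> Sn_orbit n (Pstd (n - d + 1)))"
  proof -
    have "(colon_ideal n d :: 'k mpoly set) = W n d" by (rule K_eq_W)
    also have "\<dots> = ideal_gen n (J_gens n \<union> Sn_orbit n (Pstd (n - d + 1)))" by (rule W_orbit[OF assms])
    finally show ?thesis .
  qed
  have P1: "odd (n + d) \<Longrightarrow> (Pstd (n - d + 1) :: 'k mpoly) = (\<Prod>i=1..(n - d + 1) div 2. var (2*i - 1) - var (2*i))"
  proof -
    assume "odd (n + d)"
    then have "even (n - d + 1)" using assms by presburger
    then show ?thesis by (simp add: Pstd_def Dg_def pp_std)
  qed
  have P2: "even (n + d) \<Longrightarrow> (Pstd (n - d + 1) :: 'k mpoly) = var (n - d + 1) * (\<Prod>i=1..(n - d) div 2. var (2*i - 1) - var (2*i))"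
  proof -
    assume "even (n + d)"
    then have "odd (n - d + 1)" "(n - d + 1) div 2 = (n - d) div 2" using assms by presburger+
    then show ?thesis by (simp add: Pstd_def Dg_def pp_std)
  qed
  show ?thesis using main P1 P2 by auto
qed

end
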